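(* Let $G$ be an SE-graph and let $P,Q$ be standard, weakly intersecting directed paths in $G$ with $\alpha(t_P)=\alpha(t_Q)$, and with either $\alpha(s_P)\ne\alpha(s_Q)$ or $\alpha(s_P)=\alpha(s_Q)=0$. Suppose $P$ is lower than $Q$. Then $w(P)w(Q)=q\,w(Q)w(P)$.
   Context: Fix a field $\mathbb K$, $q\in\mathbb K^\ast$. An SE-graph is a finite directed graph $G=(V,E)$ embedded in the plane (planar) whose edges are horizontal directed to the right (H-edges) or vertical directed downward (V-edges), with sources $r_1,\dots,r_m$ on a vertical line in this order upward and sinks $c_1,\dots,c_n$ on a horizontal line in order left to right, sources incident only to H-edges and sinks only to V-edges, every vertex lying on a directed source-to-sink path. Here the sources lie on the ray $\{0\}\times\mathbb R_{\ge0}$ and the sinks on the ray $\mathbb R_{\ge 0}\times\{0\}$; a point $v$ has coordinates $(\alpha(v),\beta(v))$. Standing convention: two vertices have the same first (resp. second) coordinate if and only if they lie on a common vertical (resp. horizontal) directed path of $G$. Let $W$ be the inner vertices; $\mathcal L_G$ is the $\mathbb K$-algebra of Laurent polynomials in $W$ with, for distinct $u,v\in W$: $uv=qvu$ if there is a directed horizontal path from $u$ to $v$; $vu=quv$ if there is a directed vertical path from $u$ to $v$; $uv=vu$ otherwise. Edge weights: $w(e)=v$ if $e=(u,v)$ with $u$ a source; $w(e)=u^{-1}v$ for an H-edge $e=(u,v)$ with $u,v\in W$; $w(e)=1$ for V-edges. The weight of a directed path is the ordered product of its edge weights. For a directed path $P$, $s_P,t_P$ are its first and last vertices; $P$ is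 standard if it has at least one H-edge. $P,Q$ are weakly intersecting if $P\cap Q=\{s_P,t_P\}\cap\{s_Q,t_Q\}$. For weakly intersecting $P,Q$, $P$ is lower than $Q$ if there are points $x\in P$, $y\in Q$ with $\alpha(x)=\alpha(y)$ and $\beta(x)<\beta(y)$. *)

theory Defs
  imports "HOL-Analysis.Analysis"
begin

definition pos :: "('v \<Rightarrow> real) \<Rightarrow> ('v \<Rightarrow> real) \<Rightarrow> 'v \<Rightarrow> real \<times> real" where
  "pos \<alpha> \<beta> v = (\<alpha> v, \<beta> v)"

definition H_edge :: "('v \<Rightarrow> real) \<Rightarrow> ('v \<Rightarrow> real) \<Rightarrow> 'v \<times> 'v \<Rightarrow> bool" where
  "H_edge \<alpha> \<beta> e = (\<beta> (fst e) = \<beta> (snd e) \<and> \<alpha> (fst e) < \<alpha> (snd e))"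

definition V_edge :: "('v \<Rightarrow> real) \<Rightarrow> ('v \<Rightarrow> real) \<Rightarrow> 'v \<times> 'v \<Rightarrow> bool" where
  "V_edge \<alpha> \<beta> e = (\<alpha> (fst e) = \<alpha> (snd e) \<and> \<beta> (snd e) < \<beta> (fst e))"

definition edge_seg :: "('v \<Rightarrow> real) \<Rightarrow> ('v \<Rightarrow> real) \<Rightarrow> 'v \<times> 'v \<Rightarrow> (real \<times> real) set" where
  "edge_seg \<alpha> \<beta> e = closed_segment (pos \<alpha> \<beta> (fst e)) (pos \<alpha> \<beta> (snd e))"

text \<open>Directed paths are represented by their (nonempty) vertex sequence.\<close>
definition edges_of :: "'v list \<Rightarrow> ('v \<times> 'v) list" where
  "edges_of p = zip p (tl p)"

definition dpath :: "('v \<times> 'v) set \<Rightarrow> 'v list \<Rightarrow> bool" where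
  "dpath E p = (p \<noteq> [] \<and> (\<forall>e\<in>set (edges_of p). e \<in> E))"

definition H_path :: "('v \<times> 'v) set \<Rightarrow> ('v \<Rightarrow> real) \<Rightarrow> ('v \<Rightarrow> real) \<Rightarrow> 'v \<Rightarrow> 'v \<Rightarrow> bool" where
  "H_path E \<alpha> \<beta> u v = (\<exists>p. dpath E p \<and> length p \<ge> 2 \<and> hd p = u \<and> last p = v \<and>
       (\<forall>e\<in>set (edges_of p). H_edge \<alpha> \<beta> e))"

definition V_path :: "('v \<times> 'v) set \<Rightarrow> ('v \<Rightarrow> real) \<Rightarrow> ('v \<Rightarrow> real) \<Rightarrow> 'v \<Rightarrow> 'v \<Rightarrow> bool" where
  "V_path E \<alpha> \<beta> u v = (\<exists>p. dpath E p \<and> length p \<ge> 2 \<and> hd p = u \<and> last p = v \<and>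
       (\<forall>e\<in>set (edges_of p). V_edge \<alpha> \<beta> e))"

text \<open>SE-graph with vertex set V, edge set E, source set R (on the ray {0} x [0,oo)),
  sink set C (on the ray [0,oo) x {0}); the ordering of the sources upward and of the sinks
  left-to-right is just their indexing by coordinate.  Inner vertices: V - R - C.\<close>
definition SE_graph :: "'v set \<Rightarrow> ('v \<times> 'v) set \<Rightarrow> 'v set \<Rightarrow> 'v set \<Rightarrow>
    ('v \<Rightarrow> real) \<Rightarrow> ('v \<Rightarrow> real) \<Rightarrow> bool" where
  "SE_graph V E R C \<alpha> \<beta> =
    (finite V \<and> E \<subseteq> V \<times> V \<and> R \<subseteq> V \<and> C \<subseteq> V \<and> R \<inter> C = {} \<and>
     (\<forall>e\<in>E. H_edge \<alpha> \<beta> e \<or> V_edge \<alpha> \<beta> e) \<and>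
     \<comment> \<open>planar embedding: distinct vertices at distinct points, edges meet only at common
        endpoints, and no vertex lies in the interior of an edge\<close>
     inj_on (pos \<alpha> \<beta>) V \<and>
     (\<forall>e1\<in>E. \<forall>e2\<in>E. e1 \<noteq> e2 \<longrightarrow>
        edge_seg \<alpha> \<beta> e1 \<inter> edge_seg \<alpha> \<beta> e2 \<subseteq>
          pos \<alpha> \<beta> ` ({fst e1, snd e1} \<inter> {fst e2, snd e2})) \<and>
     (\<forall>v\<in>V. \<forall>e\<in>E. pos \<alpha> \<beta> v \<in> edge_seg \<alpha> \<beta> e \<longrightarrow> v = fst e \<or> v = snd e) \<and>
     \<comment> \<open>sources and sinks\<close>
     (\<forall>r\<in>R. \<alpha> r = 0 \<and> \<beta> r \<ge> 0) \<and>
     (\<forall>c\<in>C. \<beta> c = 0 \<and> \<alpha> c \<ge> 0) \<and>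
     (\<forall>e\<in>E. snd e \<notin> R \<and> fst e \<notin> C) \<and>
     (\<forall>e\<in>E. fst e \<in> R \<or> snd e \<in> R \<longrightarrow> H_edge \<alpha> \<beta> e) \<and>
     (\<forall>e\<in>E. fst e \<in> C \<or> snd e \<in> C \<longrightarrow> V_edge \<alpha> \<beta> e) \<and>
     \<comment> \<open>every vertex lies on a directed source-to-sink path\<close>
     (\<forall>v\<in>V. \<exists>p. dpath E p \<and> hd p \<in> R \<and> last p \<in> C \<and> v \<in> set p) \<and>
     \<comment> \<open>standing convention (for inner vertices)\<close>
     (\<forall>u\<in>V - R - C. \<forall>v\<in>V - R - C. u \<noteq> v \<longrightarrow>
        (\<alpha> u = \<alpha> v \<longleftrightarrow> V_path E \<alpha> \<beta> u v \<or> V_path E \<alpha> \<beta> v u) \<and>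
        (\<beta> u = \<beta> v \<longleftrightarrow> H_path E \<alpha> \<beta> u v \<or> H_path E \<alpha> \<beta> v u)))"

text \<open>Edge weights in an algebra where x v represents the generator v of L_G and
  xi v its inverse.\<close>
definition edge_wt :: "'v set \<Rightarrow> ('v \<Rightarrow> real) \<Rightarrow> ('v \<Rightarrow> real) \<Rightarrow>
    ('v \<Rightarrow> 'a::ring_1) \<Rightarrow> ('v \<Rightarrow> 'a) \<Rightarrow> 'v \<times> 'v \<Rightarrow> 'a" where
  "edge_wt R \<alpha> \<beta> x xi e =
     (if fst e \<in> R then x (snd e)
      else if H_edge \<alpha> \<beta> e then xi (fst e) * x (snd e)
      else 1)"

definition path_wt :: "'v set \<Rightarrow> ('v \<Rightarrow> real) \<Rightarrow> ('v \<Rightarrow> real) \<Rightarrow>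
    ('v \<Rightarrow> 'a::ring_1) \<Rightarrow> ('v \<Rightarrow> 'a) \<Rightarrow> 'v list \<Rightarrow> 'a" where
  "path_wt R \<alpha> \<beta> x xi p = prod_list (map (edge_wt R \<alpha> \<beta> x xi) (edges_of p))"

definition standard_path :: "('v \<Rightarrow> real) \<Rightarrow> ('v \<Rightarrow> real) \<Rightarrow> 'v list \<Rightarrow> bool" where
  "standard_path \<alpha> \<beta> p = (\<exists>e\<in>set (edges_of p). H_edge \<alpha> \<beta> e)"

definition weakly_intersecting :: "'v list \<Rightarrow> 'v list \<Rightarrow> bool" where
  "weakly_intersecting P Q = (set P \<inter> set Q = {hd P, last P} \<inter> {hd Q, last Q})"

definition path_points :: "('v \<Rightarrow> real) \<Rightarrow> ('v \<Rightarrow> real) \<Rightarrow> 'v list \<Rightarrow> (real \<times> real) set" where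
  "path_points \<alpha> \<beta> p = pos \<alpha> \<beta> ` set p \<union> (\<Union>e\<in>set (edges_of p). edge_seg \<alpha> \<beta> e)"

definition lower_than :: "('v \<Rightarrow> real) \<Rightarrow> ('v \<Rightarrow> real) \<Rightarrow> 'v list \<Rightarrow> 'v list \<Rightarrow> bool" where
  "lower_than \<alpha> \<beta> P Q = (\<exists>x\<in>path_points \<alpha> \<beta> P. \<exists>y\<in>path_points \<alpha> \<beta> Q.
      fst x = fst y \<and> snd x < snd y)"

definition LG_relations :: "('v \<times> 'v) set \<Rightarrow> 'v set \<Rightarrow> ('v \<Rightarrow> real) \<Rightarrow> ('v \<Rightarrow> real) \<Rightarrow>
    'a::ring_1 \<Rightarrow> ('v \<Rightarrow> 'a) \<Rightarrow> bool" where
  "LG_relations E W \<alpha> \<beta> qa x =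
    (\<forall>u\<in>W. \<forall>v\<in>W. u \<noteq> v \<longrightarrow>
       (H_path E \<alpha> \<beta> u v \<longrightarrow> x u * x v = qa * (x v * x u)) \<and>
       (V_path E \<alpha> \<beta> u v \<longrightarrow> x v * x u = qa * (x u * x v)) \<and>
       (\<not> (H_path E \<alpha> \<beta> u v \<or> H_path E \<alpha> \<beta> v u \<or> V_path E \<alpha> \<beta> u v \<or> V_path E \<alpha> \<beta> v u)
          \<longrightarrow> x u * x v = x v * x u))"

end

theory Submission
  imports Defs
begin

definition qc :: "('k::field \<Rightarrow> 'a::ring_1) \<Rightarrow> 'k \<Rightarrow> 'a \<Rightarrow> 'a \<Rightarrow> int \<Rightarrow> bool" where
  "qc emb q a b n \<longleftrightarrow> a * b = emb (q powi n) * (b * a)"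

locale qalg =
  fixes emb :: "'k::field \<Rightarrow> 'a::ring_1" and q :: 'k
  assumes emb_one: "emb 1 = 1"
    and emb_mult: "\<And>a b. emb (a * b) = emb a * emb b"
    and emb_central: "\<And>a y. emb a * y = y * emb a"
    and q_nz: "q \<noteq> 0"
begin

abbreviation Z where "Z n \<equiv> emb (q powi n)"

lemma Z_add: "Z (m + n) = Z m * Z n"
  using q_nz by (simp add: power_int_add emb_mult)

lemma Z0: "Z 0 = 1" by (simp add: emb_one)

lemma Z_neg: "Z (-n) * Z n = 1"
  using Z_add[of "-n" n] Z0 by simp

lemma qc_mult_right:
  assumes "qc emb q a b m" "qc emb q a c n" shows "qc emb q a (b * c) (m + n)"
proof -
  have "a * (b * c) = (a * b) * c" by (simp add: mult.assoc)
  also have "\<dots> = Z m * (b * (a * c))" using assms(1) unfolding qc_def by (simp add: mult.assoc)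
  also have "\<dots> = Z m * (b * (Z n * (c * a)))" using assms(2) unfolding qc_def by simp
  also have "\<dots> = Z m * (Z n * (b * (c * a)))" by (metis emb_central mult.assoc)
  also have "\<dots> = Z (m + n) * (b * c * a)" by (simp add: Z_add mult.assoc)
  finally show ?thesis unfolding qc_def .
qed

lemma qc_mult_left:
  assumes "qc emb q a c m" "qc emb q b c n" shows "qc emb q (a * b) c (m + n)"
proof -
  have "(a * b) * c = a * (b * c)" by (simp add: mult.assoc)
  also have "\<dots> = a * (Z n * (c * b))" using assms(2) unfolding qc_def by simp
  also have "\<dots> = Z n * ((a * c) * b)" by (metis emb_central mult.assoc)
  also have "\<dots> = Z n * (Z m * (c * a) * b)" using assms(1) unfolding qc_def by simp
  also have "\<dots> = (Z n * Z m) * (c * (a * b))" by (simp add: mult.assoc)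
  also have "\<dots> = Z (m + n) * (c * (a * b))" using Z_add[of m n] emb_central[of "q powi n" "Z m"] by simp
  finally show ?thesis unfolding qc_def .
qed

lemma qc_one_right: "qc emb q a 1 0" unfolding qc_def by (simp add: emb_one)
lemma qc_one_left: "qc emb q 1 a 0" unfolding qc_def by (simp add: emb_one)

lemma qc_prod_right:
  assumes "\<And>y. y \<in> set ys \<Longrightarrow> qc emb q a (f y) (g y)"
  shows "qc emb q a (prod_list (map f ys)) (sum_list (map g ys))"
  using assms
proof (induction ys)
  case Nil then show ?case by (simp add: qc_one_right)
next
  case (Cons y ys) then show ?case using qc_mult_right by simp
qed

lemma qc_prod_left:
  assumes "\<And>y. y \<in> set ys \<Longrightarrow> qc emb q (f y) b (g y)"
  shows "qc emb q (prod_list (map f ys)) b (sum_list (map g ys))"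
  using assms
proof (induction ys)
  case Nil then show ?case by (simp add: qc_one_left)
next
  case (Cons y ys) then show ?case using qc_mult_left by simp
qed

lemma qc_sym: assumes "qc emb q a b n" shows "qc emb q b a (-n)"
proof -
  have "Z (-n) * (a * b) = Z (-n) * (Z n * (b * a))" using assms unfolding qc_def by simp
  also have "\<dots> = b * a" by (simp add: mult.assoc[symmetric] Z_neg)
  finally show ?thesis unfolding qc_def by simp
qed

lemma qc_inv_left:
  assumes "qc emb q a b n" "a * ai = 1" "ai * a = 1" shows "qc emb q ai b (-n)"
proof -
  have ba: "b * a = Z (-n) * (a * b)" using qc_sym[OF assms(1)] unfolding qc_def .
  have "ai * b = ai * b * (a * ai)" using assms(2) by simp
  also have "\<dots> = ai * (b * a) * ai" by (simp add: mult.assoc)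
  also have "\<dots> = ai * (Z (-n) * (a * b)) * ai" using ba by simp
  also have "\<dots> = Z (-n) * ((ai * a) * b * ai)" by (metis emb_central mult.assoc)
  also have "\<dots> = Z (-n) * (b * ai)" using assms(3) by (simp add: mult.assoc)
  finally show ?thesis unfolding qc_def .
qed

lemma qc_inv_right:
  assumes "qc emb q a b n" "b * bi = 1" "bi * b = 1" shows "qc emb q a bi (-n)"
  using qc_sym[OF qc_inv_left[OF qc_sym[OF assms(1)] assms(2,3)]] by simp

end

definition le2 :: "real \<times> real \<Rightarrow> real \<times> real \<Rightarrow> bool" where
  "le2 z w \<longleftrightarrow> fst z \<le> fst w \<and> snd w \<le> snd z"

lemma le2_refl[simp]: "le2 z z" by (simp add: le2_def)
lemma le2_trans: "le2 a b \<Longrightarrow> le2 b c \<Longrightarrow> le2 a c" by (auto simp: le2_def)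
lemma le2_antisym: "le2 a b \<Longrightarrow> le2 b a \<Longrightarrow> a = b" by (auto simp: le2_def prod_eq_iff)

lemma seg_param:
  fixes a b z :: "real \<times> real"
  shows "z \<in> closed_segment a b \<longleftrightarrow> (\<exists>u. 0 \<le> u \<and> u \<le> 1 \<and>
      fst z = (1 - u) * fst a + u * fst b \<and> snd z = (1 - u) * snd a + u * snd b)"
  unfolding closed_segment_def by (auto simp: prod_eq_iff)

lemma between_aux:
  fixes x y u :: real assumes "x \<le> y" "0 \<le> u" "u \<le> 1"
  shows "x \<le> (1 - u) * x + u * y" "(1 - u) * x + u * y \<le> y"
proof -
  have "(1 - u) * x + u * y = x + u * (y - x)" by (simp add: algebra_simps)
  moreover have "u * (y - x) \<ge> 0" using assms by simp
  moreover have "u * (y - x) \<le> y - x" using assms mult_left_le_one_le[of "y - x" u] by simp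
  ultimately show "x \<le> (1 - u) * x + u * y" "(1 - u) * x + u * y \<le> y" by linarith+
qed

lemma between_aux2:
  fixes x y u :: real assumes "y \<le> x" "0 \<le> u" "u \<le> 1"
  shows "y \<le> (1 - u) * x + u * y" "(1 - u) * x + u * y \<le> x"
proof -
  have "(1 - u) * x + u * y = x - u * (x - y)" by (simp add: algebra_simps)
  moreover have "u * (x - y) \<ge> 0" using assms by simp
  moreover have "u * (x - y) \<le> x - y" using assms mult_left_le_one_le[of "x - y" u] by simp
  ultimately show "y \<le> (1 - u) * x + u * y" "(1 - u) * x + u * y \<le> x" by linarith+
qed

lemma seg_le2:
  assumes "le2 a b" "z \<in> closed_segment a b" shows "le2 a z" "le2 z b"
  using assms between_aux[of "fst a" "fst b"] between_aux2[of "snd b" "snd a"]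
  unfolding seg_param le2_def by auto

lemma seg_ivt:
  fixes c1 c2 y :: real and a b :: "real \<times> real"
  assumes "c1 * fst a + c2 * snd a \<le> y" "y \<le> c1 * fst b + c2 * snd b"
  shows "\<exists>w\<in>closed_segment a b. c1 * fst w + c2 * snd w = y"
proof (cases "c1 * fst a + c2 * snd a = c1 * fst b + c2 * snd b")
  case True then show ?thesis using assms by (intro bexI[of _ a]) auto
next
  case False
  define fa fb where "fa = c1 * fst a + c2 * snd a" and "fb = c1 * fst b + c2 * snd b"
  have lt: "fa < fb" using False assms fa_def fb_def by linarith
  define u where "u = (y - fa) / (fb - fa)"
  have u0: "0 \<le> u" using assms lt by (simp add: u_def fa_def)
  have u1: "u \<le> 1" using assms lt by (simp add: u_def fb_def)
  define w where "w = ((1 - u) * fst a + u * fst b, (1 - u) * snd a + u * snd b)"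
  have "w \<in> closed_segment a b" unfolding seg_param w_def using u0 u1 by auto
  moreover have "c1 * fst w + c2 * snd w = (1 - u) * fa + u * fb"
    by (simp add: w_def fa_def fb_def algebra_simps)
  moreover have "(1 - u) * fa + u * fb = fa + u * (fb - fa)" by (simp add: algebra_simps)
  moreover have "u * (fb - fa) = y - fa" using lt by (simp add: u_def)
  ultimately show ?thesis by auto
qed

lemma hseg_mem:
  fixes a b z :: "real \<times> real"
  assumes "snd a = snd b" "fst a \<le> fst b" "snd z = snd a" "fst a \<le> fst z" "fst z \<le> fst b"
  shows "z \<in> closed_segment a b"
proof -
  obtain w where w: "w \<in> closed_segment a b" "1 * fst w + 0 * snd w = fst z"
    using seg_ivt[of 1 a 0 "fst z" b] assms by auto
  have "le2 a w" "le2 w b" using seg_le2[OF _ w(1)] assms by (auto simp: le2_def)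
  then have "snd w = snd z" using assms by (auto simp: le2_def)
  then have "w = z" using w(2) by (simp add: prod_eq_iff)
  then show ?thesis using w(1) by simp
qed

lemma vseg_mem:
  fixes a b z :: "real \<times> real"
  assumes "fst a = fst b" "snd b \<le> snd a" "fst z = fst a" "snd b \<le> snd z" "snd z \<le> snd a"
  shows "z \<in> closed_segment a b"
proof -
  obtain w where w: "w \<in> closed_segment a b" "0 * fst w + (-1) * snd w = - snd z"
    using seg_ivt[of 0 a "-1" "- snd z" b] assms by auto
  have "le2 a w" "le2 w b" using seg_le2[OF _ w(1)] assms by (auto simp: le2_def)
  then have "fst w = fst z" using assms by (auto simp: le2_def)
  then have "w = z" using w(2) by (simp add: prod_eq_iff)
  then show ?thesis using w(1) by simp
qed

lemma edges_of_simps[simp]: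
  "edges_of [] = []" "edges_of [u] = []" "edges_of (u # v # r) = (u, v) # edges_of (v # r)"
  by (simp_all add: edges_of_def)

lemma dpath_simps[simp]:
  "dpath E [u]" "dpath E (u # v # r) \<longleftrightarrow> (u, v) \<in> E \<and> dpath E (v # r)" "\<not> dpath E []"
  by (auto simp: dpath_def)

lemma pts_simps:
  "path_points a b [u] = {pos a b u}"
  "path_points a b (u # v # r) = closed_segment (pos a b u) (pos a b v) \<union> path_points a b (v # r)"
  by (auto simp: path_points_def edges_of_def edge_seg_def)

locale se =
  fixes V :: "'v set" and E :: "('v \<times> 'v) set" and R C :: "'v set"
    and \<alpha> \<beta> :: "'v \<Rightarrow> real"
  assumes G: "SE_graph V E R C \<alpha> \<beta>"
begin

abbreviation pt where "pt \<equiv> pos \<alpha> \<beta>"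
abbreviation pts where "pts \<equiv> path_points \<alpha> \<beta>"
abbreviation seg where "seg \<equiv> edge_seg \<alpha> \<beta>"

lemma pt_simps[simp]: "fst (pt v) = \<alpha> v" "snd (pt v) = \<beta> v" by (simp_all add: pos_def)

lemma EV: "e \<in> E \<Longrightarrow> fst e \<in> V \<and> snd e \<in> V" using G unfolding SE_graph_def by auto
lemma HorV: "e \<in> E \<Longrightarrow> H_edge \<alpha> \<beta> e \<or> V_edge \<alpha> \<beta> e" using G unfolding SE_graph_def by auto
lemma injp: "inj_on pt V" using G unfolding SE_graph_def by auto
lemma planar0: "\<forall>e1\<in>E. \<forall>e2\<in>E. e1 \<noteq> e2 \<longrightarrow>
        edge_seg \<alpha> \<beta> e1 \<inter> edge_seg \<alpha> \<beta> e2 \<subseteq>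
          pos \<alpha> \<beta> ` ({fst e1, snd e1} \<inter> {fst e2, snd e2})"
  and vonseg0: "\<forall>v\<in>V. \<forall>e\<in>E. pos \<alpha> \<beta> v \<in> edge_seg \<alpha> \<beta> e \<longrightarrow> v = fst e \<or> v = snd e"
  and conv0: "\<forall>u\<in>V - R - C. \<forall>v\<in>V - R - C. u \<noteq> v \<longrightarrow>
        (\<alpha> u = \<alpha> v \<longleftrightarrow> V_path E \<alpha> \<beta> u v \<or> V_path E \<alpha> \<beta> v u) \<and>
        (\<beta> u = \<beta> v \<longleftrightarrow> H_path E \<alpha> \<beta> u v \<or> H_path E \<alpha> \<beta> v u)"
  using G[unfolded SE_graph_def, THEN conjunct2, THEN conjunct2, THEN conjunct2, THEN conjunct2, THEN conjunct2, THEN conjunct2, THEN conjunct2, THEN conjunct1]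
    G[unfolded SE_graph_def, THEN conjunct2, THEN conjunct2, THEN conjunct2, THEN conjunct2, THEN conjunct2, THEN conjunct2, THEN conjunct2, THEN conjunct2, THEN conjunct1]
    G[unfolded SE_graph_def, THEN conjunct2, THEN conjunct2, THEN conjunct2, THEN conjunct2, THEN conjunct2, THEN conjunct2, THEN conjunct2, THEN conjunct2, THEN conjunct2, THEN conjunct2, THEN conjunct2, THEN conjunct2, THEN conjunct2, THEN conjunct2, THEN conjunct2] by simp_all

lemma planar: "e1 \<in> E \<Longrightarrow> e2 \<in> E \<Longrightarrow> e1 \<noteq> e2 \<Longrightarrow>
   seg e1 \<inter> seg e2 \<subseteq> pt ` ({fst e1, snd e1} \<inter> {fst e2, snd e2})"
  using planar0 by simp
lemma vonseg: "v \<in> V \<Longrightarrow> e \<in> E \<Longrightarrow> pt v \<in> seg e \<Longrightarrow> v = fst e \<or> v = snd e"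
  using vonseg0 by simp
lemma Rzero: "r \<in> R \<Longrightarrow> \<alpha> r = 0" using G unfolding SE_graph_def by auto
lemma sndR: "e \<in> E \<Longrightarrow> snd e \<notin> R" using G unfolding SE_graph_def by auto
lemma fstC: "e \<in> E \<Longrightarrow> fst e \<notin> C" using G unfolding SE_graph_def by auto
lemma RH: "e \<in> E \<Longrightarrow> fst e \<in> R \<Longrightarrow> H_edge \<alpha> \<beta> e" using G unfolding SE_graph_def by auto
lemma CV: "e \<in> E \<Longrightarrow> snd e \<in> C \<Longrightarrow> V_edge \<alpha> \<beta> e" using G unfolding SE_graph_def by auto
lemma onpath: "v \<in> V \<Longrightarrow> \<exists>p. dpath E p \<and> hd p \<in> R \<and> last p \<in> C \<and> v \<in> set p"
  using G unfolding SE_graph_def by auto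
lemma conv: "u \<in> V - R - C \<Longrightarrow> v \<in> V - R - C \<Longrightarrow> u \<noteq> v \<Longrightarrow>
   (\<alpha> u = \<alpha> v \<longleftrightarrow> V_path E \<alpha> \<beta> u v \<or> V_path E \<alpha> \<beta> v u) \<and>
   (\<beta> u = \<beta> v \<longleftrightarrow> H_path E \<alpha> \<beta> u v \<or> H_path E \<alpha> \<beta> v u)"
  using conv0 by simp

lemma HV_excl: "H_edge \<alpha> \<beta> e \<Longrightarrow> \<not> V_edge \<alpha> \<beta> e" by (auto simp: H_edge_def V_edge_def)

lemma edge_le2: "(u, v) \<in> E \<Longrightarrow> le2 (pt u) (pt v)"
  using HorV[of "(u,v)"] by (auto simp: H_edge_def V_edge_def le2_def)

lemma edge_ne: "(u, v) \<in> E \<Longrightarrow> pt u \<noteq> pt v"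
  using HorV[of "(u,v)"] by (auto simp: H_edge_def V_edge_def pos_def)

lemma pts_hd: "p \<noteq> [] \<Longrightarrow> pt (hd p) \<in> pts p"
  by (cases p) (auto simp: path_points_def)
lemma pts_last: "p \<noteq> [] \<Longrightarrow> pt (last p) \<in> pts p"
  by (auto simp: path_points_def)
lemma pts_vert: "v \<in> set p \<Longrightarrow> pt v \<in> pts p"
  by (auto simp: path_points_def)

lemma path_pts_le:
  "dpath E p \<Longrightarrow> z \<in> pts p \<Longrightarrow> le2 (pt (hd p)) z \<and> le2 z (pt (last p))"
proof (induction p arbitrary: z rule: induct_list012)
  case 1 then show ?case by simp
next
  case (2 x) then show ?case by (simp add: pts_simps)
next
  case (3 x y zs)
  have e: "(x, y) \<in> E" and d: "dpath E (y # zs)" using 3 by auto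
  show ?case
  proof (cases "z \<in> closed_segment (pt x) (pt y)")
    case True
    have a: "le2 (pt x) z" and b: "le2 z (pt y)" using seg_le2[OF edge_le2[OF e] True] by auto
    have c: "le2 (pt y) (pt (last (y # zs)))" using "3.IH"(2)[OF d pts_hd[of "y # zs"]] by simp
    have "le2 z (pt (last (y # zs)))" by (rule le2_trans[OF b c])
    then show ?thesis using a by simp
  next
    case False
    then have z: "z \<in> pts (y # zs)" using 3 by (simp add: pts_simps)
    have h1: "le2 (pt y) z" and h2: "le2 z (pt (last (y # zs)))" using "3.IH"(2)[OF d z] by simp_all
    have "le2 (pt x) z" by (rule le2_trans[OF edge_le2[OF e] h1])
    then show ?thesis using h2 by simp
  qed
qed


lemma path_vert_le: "dpath E p \<Longrightarrow> v \<in> set p \<Longrightarrow> le2 (pt (hd p)) (pt v) \<and> le2 (pt v) (pt (last p))"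
  using path_pts_le pts_vert by blast

lemma strict_hd:
  assumes "dpath E (u # v # r)" "w \<in> set (v # r)"
  shows "pt u \<noteq> pt w \<and> le2 (pt u) (pt w)"
proof -
  have e: "(u, v) \<in> E" and d: "dpath E (v # r)" using assms(1) by auto
  have a: "le2 (pt v) (pt w)" using path_vert_le[OF d assms(2)] by simp
  have b: "le2 (pt u) (pt w)" by (rule le2_trans[OF edge_le2[OF e] a])
  have "pt u \<noteq> pt w"
  proof
    assume "pt u = pt w"
    then have "pt u = pt v" using a edge_le2[OF e] le2_antisym by metis
    then show False using edge_ne[OF e] by simp
  qed
  then show ?thesis using b by simp
qed

lemma dpath_distinct: "dpath E p \<Longrightarrow> distinct p"
proof (induction p rule: induct_list012)
  case (3 x y zs)
  then have "x \<notin> set (y # zs)" using strict_hd[OF "3.prems"] by blast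
  then show ?case using 3 by simp
qed auto

lemma dpath_V: "dpath E p \<Longrightarrow> 2 \<le> length p \<Longrightarrow> set p \<subseteq> V"
proof (induction p rule: induct_list012)
  case (3 x y zs)
  have e: "(x, y) \<in> E" using "3.prems" by simp
  have "set (y # zs) \<subseteq> V"
  proof (cases zs)
    case Nil then show ?thesis using EV[OF e] by simp
  next
    case (Cons a l) then show ?thesis using 3 by simp
  qed
  then show ?case using EV[OF e] by simp
qed auto

lemma edges_in: "e \<in> set (edges_of p) \<Longrightarrow> fst e \<in> set p \<and> snd e \<in> set p"
  unfolding edges_of_def
  by (metis list.set_sel(2) set_zip_leftD set_zip_rightD surjective_pairing tl_Nil zip_Nil zip.simps(1) list.sel(2) empty_iff list.set(1))

lemma edges_E: "dpath E p \<Longrightarrow> e \<in> set (edges_of p) \<Longrightarrow> e \<in> E"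
  by (simp add: dpath_def)

lemma edges_len: "e \<in> set (edges_of p) \<Longrightarrow> 2 \<le> length p"
  unfolding edges_of_def by (cases p; cases "tl p") auto

lemma std_lt:
  assumes "dpath E p" "standard_path \<alpha> \<beta> p"
  shows "\<alpha> (hd p) < \<alpha> (last p) \<and> 2 \<le> length p"
proof -
  obtain e where e: "e \<in> set (edges_of p)" "H_edge \<alpha> \<beta> e" using assms(2) by (auto simp: standard_path_def)
  have "le2 (pt (hd p)) (pt (fst e))" "le2 (pt (snd e)) (pt (last p))"
    using path_vert_le[OF assms(1)] edges_in[OF e(1)] by auto
  then show ?thesis using e(2) edges_len[OF e(1)] by (auto simp: le2_def H_edge_def)
qed

lemma inner_pos: assumes "v \<in> V" "v \<notin> R" shows "0 < \<alpha> v"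
proof -
  obtain p where p: "dpath E p" "hd p \<in> R" "v \<in> set p" using onpath[OF assms(1)] by auto
  obtain r l where pl: "p = r # l" using p(1) by (cases p) auto
  have "v \<in> set l" using p assms(2) pl by auto
  then obtain v1 l1 where l: "l = v1 # l1" by (cases l) auto
  have e: "(r, v1) \<in> E" and d: "dpath E l" using p(1) pl l by auto
  have "H_edge \<alpha> \<beta> (r, v1)" using RH[OF e] p(2) pl by simp
  then have "\<alpha> r < \<alpha> v1" by (simp add: H_edge_def)
  moreover have "\<alpha> r = 0" using Rzero p(2) pl by simp
  moreover have "le2 (pt v1) (pt v)" using path_vert_le[OF d \<open>v \<in> set l\<close>] l by simp
  ultimately show ?thesis by (auto simp: le2_def)
qed

lemma V_nonneg: "v \<in> V \<Longrightarrow> 0 \<le> \<alpha> v"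
  using inner_pos Rzero by (cases "v \<in> R") (auto intro: less_imp_le)

lemma Hlist: "\<forall>e\<in>set (edges_of p). H_edge \<alpha> \<beta> e \<Longrightarrow> 2 \<le> length p \<Longrightarrow>
   \<beta> (hd p) = \<beta> (last p) \<and> \<alpha> (hd p) < \<alpha> (last p)"
proof (induction p rule: induct_list012)
  case (3 x y zs)
  show ?case
  proof (cases zs)
    case Nil then show ?thesis using "3.prems" by (simp add: H_edge_def)
  next
    case (Cons a l) then show ?thesis using 3 by (auto simp: H_edge_def)
  qed
qed auto

lemma Vlist: "\<forall>e\<in>set (edges_of p). V_edge \<alpha> \<beta> e \<Longrightarrow> 2 \<le> length p \<Longrightarrow>
   \<alpha> (hd p) = \<alpha> (last p) \<and> \<beta> (last p) < \<beta> (hd p)"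
proof (induction p rule: induct_list012)
  case (3 x y zs)
  show ?case
  proof (cases zs)
    case Nil then show ?thesis using "3.prems" by (simp add: V_edge_def)
  next
    case (Cons a l) then show ?thesis using 3 by (auto simp: V_edge_def)
  qed
qed auto

lemma H_path_coord: "H_path E \<alpha> \<beta> u v \<Longrightarrow> \<beta> u = \<beta> v \<and> \<alpha> u < \<alpha> v"
  unfolding H_path_def using Hlist by blast
lemma V_path_coord: "V_path E \<alpha> \<beta> u v \<Longrightarrow> \<alpha> u = \<alpha> v \<and> \<beta> v < \<beta> u"
  unfolding V_path_def using Vlist by blast

end

definition sg :: "real \<Rightarrow> real \<Rightarrow> int" where
  "sg a b = (if a < b then 1 else if b < a then -1 else 0)"
definition gg :: "('v \<Rightarrow> real) \<Rightarrow> ('v \<Rightarrow> real) \<Rightarrow> 'v \<Rightarrow> 'v \<Rightarrow> int" where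
  "gg \<alpha> \<beta> a b = (if \<alpha> a = \<alpha> b then sg (\<beta> a) (\<beta> b) else 0)"
definition hh :: "('v \<Rightarrow> real) \<Rightarrow> ('v \<Rightarrow> real) \<Rightarrow> 'v \<Rightarrow> 'v \<Rightarrow> int" where
  "hh \<alpha> \<beta> a b = (if \<beta> a = \<beta> b then sg (\<alpha> a) (\<alpha> b) else 0)"
definition kap :: "('v \<Rightarrow> real) \<Rightarrow> ('v \<Rightarrow> real) \<Rightarrow> 'v \<Rightarrow> 'v \<Rightarrow> int" where
  "kap \<alpha> \<beta> a b = hh \<alpha> \<beta> a b + gg \<alpha> \<beta> a b"
definition sv :: "'v set \<Rightarrow> ('v \<Rightarrow> real) \<Rightarrow> ('v \<Rightarrow> real) \<Rightarrow> 'v \<times> 'v \<Rightarrow> ('v \<times> int) list" where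
  "sv R \<alpha> \<beta> e = (if fst e \<in> R then [(snd e, 1)] else if H_edge \<alpha> \<beta> e then [(fst e, -1), (snd e, 1)] else [])"
definition svp where "svp R \<alpha> \<beta> p = concat (map (sv R \<alpha> \<beta>) (edges_of p))"
definition lin :: "('v \<times> int) list \<Rightarrow> ('v \<Rightarrow> int) \<Rightarrow> int" where
  "lin L \<phi> = sum_list (map (\<lambda>(a, s). s * \<phi> a) L)"
definition gen :: "('v \<Rightarrow> 'a) \<Rightarrow> ('v \<Rightarrow> 'a) \<Rightarrow> 'v \<times> int \<Rightarrow> 'a" where
  "gen x xi p = (if snd p = 1 then x (fst p) else xi (fst p))"

lemma sg_anti: "sg b a = - sg a b" by (auto simp: sg_def)
lemma kap_anti: "kap \<alpha> \<beta> b a = - kap \<alpha> \<beta> a b"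
  by (auto simp: kap_def gg_def hh_def sg_def)

lemma lin_simps[simp]: "lin [] f = 0" "lin (p # L) f = snd p * f (fst p) + lin L f"
  "lin (L1 @ L2) f = lin L1 f + lin L2 f"
  by (auto simp: lin_def split: prod.splits)

lemma lin_concat: "lin (concat (map g xs)) f = sum_list (map (\<lambda>e. lin (g e) f) xs)"
  by (induction xs) auto

lemma lin_add: "lin L (\<lambda>b. f b + g b) = lin L f + lin L g"
  by (induction L) (auto simp: algebra_simps)
lemma lin_diff: "lin L (\<lambda>b. f b - g b) = lin L f - lin L g"
  by (induction L) (auto simp: algebra_simps)
lemma lin_cong: "(\<And>a s. (a, s) \<in> set L \<Longrightarrow> f a = g a) \<Longrightarrow> lin L f = lin L g"
proof (induction L)
  case (Cons p L)
  obtain a s where p: "p = (a, s)" by (cases p)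
  have "f a = g a" using Cons.prems[of a s] p by simp
  moreover have "lin L f = lin L g" using Cons.IH Cons.prems by force
  ultimately show ?case using p by simp
qed simp
lemma lin_zero: "lin L f = 0" if "\<And>a s. (a, s) \<in> set L \<Longrightarrow> f a = 0"
proof -
  have "lin L f = lin L (\<lambda>_. 0)" by (rule lin_cong) (use that in auto)
  also have "\<dots> = 0" by (induction L) auto
  finally show ?thesis .
qed
lemma neg_sum: "- sum_list (map (\<lambda>b. - (snd b * F (fst b))) L) = lin L F"
  by (induction L) auto

lemma sum_list_cong': "(\<And>e. e \<in> set xs \<Longrightarrow> f e = g e) \<Longrightarrow> sum_list (map f xs) = sum_list (map g xs)"
  by (induction xs) auto

lemma telescope:
  "p \<noteq> [] \<Longrightarrow> sum_list (map (\<lambda>e. F (snd e) - F (fst e)) (edges_of p)) = F (last p) - (F (hd p) :: int)"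
  by (induction p rule: induct_list012) auto

lemma prod_concat: "prod_list (map f (concat xss)) = prod_list (map (\<lambda>xs. prod_list (map f xs)) xss)"
  by (induction xss) auto

lemma sv_wt: "prod_list (map (gen x xi) (sv R \<alpha> \<beta> e)) = edge_wt R \<alpha> \<beta> x xi e"
  by (simp add: sv_def edge_wt_def gen_def)

lemma path_wt_svp: "path_wt R \<alpha> \<beta> x xi p = prod_list (map (gen x xi) (svp R \<alpha> \<beta> p))"
  unfolding path_wt_def svp_def prod_concat map_map o_def sv_wt ..

locale full = se V E R C \<alpha> \<beta> + qalg emb q
  for V :: "'v set" and E R C \<alpha> \<beta> and emb :: "'k::field \<Rightarrow> 'a::ring_1" and q +
  fixes x xi :: "'v \<Rightarrow> 'a"
  assumes inv: "\<And>v. v \<in> V - R - C \<Longrightarrow> x v * xi v = 1 \<and> xi v * x v = 1"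
    and rel: "LG_relations E (V - R - C) \<alpha> \<beta> (emb q) x"
begin

lemma Z1: "Z 1 = emb q" by simp

lemma gen_rel_x:
  assumes u: "u \<in> V - R - C" and v: "v \<in> V - R - C"
  shows "qc emb q (x u) (x v) (kap \<alpha> \<beta> u v)"
proof (cases "u = v")
  case True
  have "kap \<alpha> \<beta> u v = 0" using True by (simp add: kap_def gg_def hh_def sg_def)
  moreover have "Z 0 * (x v * x u) = x u * x v" unfolding Z0 True by (rule mult_1_left)
  ultimately show ?thesis unfolding qc_def by (metis)
next
  case False
  have r: "H_path E \<alpha> \<beta> u v \<Longrightarrow> x u * x v = emb q * (x v * x u)"
     "H_path E \<alpha> \<beta> v u \<Longrightarrow> x v * x u = emb q * (x u * x v)"
     "V_path E \<alpha> \<beta> u v \<Longrightarrow> x v * x u = emb q * (x u * x v)"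
     "V_path E \<alpha> \<beta> v u \<Longrightarrow> x u * x v = emb q * (x v * x u)"
     "\<not> (H_path E \<alpha> \<beta> u v \<or> H_path E \<alpha> \<beta> v u \<or> V_path E \<alpha> \<beta> u v \<or> V_path E \<alpha> \<beta> v u)
        \<Longrightarrow> x u * x v = x v * x u"
  proof -
    have R: "\<forall>u\<in>V - R - C. \<forall>v\<in>V - R - C. u \<noteq> v \<longrightarrow>
       (H_path E \<alpha> \<beta> u v \<longrightarrow> x u * x v = emb q * (x v * x u)) \<and>
       (V_path E \<alpha> \<beta> u v \<longrightarrow> x v * x u = emb q * (x u * x v)) \<and>
       (\<not> (H_path E \<alpha> \<beta> u v \<or> H_path E \<alpha> \<beta> v u \<or> V_path E \<alpha> \<beta> u v \<or> V_path E \<alpha> \<beta> v u)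
          \<longrightarrow> x u * x v = x v * x u)" using rel unfolding LG_relations_def .
    note R1 = R[rule_format, OF u v False]
    note R2 = R[rule_format, OF v u False[symmetric]]
    show "H_path E \<alpha> \<beta> u v \<Longrightarrow> x u * x v = emb q * (x v * x u)" using R1 by (elim conjE) (erule mp)
    show "H_path E \<alpha> \<beta> v u \<Longrightarrow> x v * x u = emb q * (x u * x v)" using R2 by (elim conjE) (erule mp)
    show "V_path E \<alpha> \<beta> u v \<Longrightarrow> x v * x u = emb q * (x u * x v)" using R1 by (elim conjE) (erule mp)
    show "V_path E \<alpha> \<beta> v u \<Longrightarrow> x u * x v = emb q * (x v * x u)" using R2 by (elim conjE) (erule mp)
    show "\<not> (H_path E \<alpha> \<beta> u v \<or> H_path E \<alpha> \<beta> v u \<or> V_path E \<alpha> \<beta> u v \<or> V_path E \<alpha> \<beta> v u)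
        \<Longrightarrow> x u * x v = x v * x u" using R1 by (elim conjE) (erule mp)
  qed
  have c: "(\<alpha> u = \<alpha> v \<longleftrightarrow> V_path E \<alpha> \<beta> u v \<or> V_path E \<alpha> \<beta> v u) \<and>
   (\<beta> u = \<beta> v \<longleftrightarrow> H_path E \<alpha> \<beta> u v \<or> H_path E \<alpha> \<beta> v u)" using conv[OF u v False] .
  have ne: "pt u \<noteq> pt v" using injp u v False by (auto simp: inj_on_def)
  show ?thesis
  proof (cases "\<beta> u = \<beta> v")
    case b: True
    then have a: "\<alpha> u \<noteq> \<alpha> v" using ne by (simp add: pos_def)
    show ?thesis
    proof (cases "\<alpha> u < \<alpha> v")
      case True
      then have "H_path E \<alpha> \<beta> u v" using c b H_path_coord[of v u] by auto
      then show ?thesis using r(1) b a True by (simp add: qc_def kap_def gg_def hh_def sg_def)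
    next
      case False
      then have "H_path E \<alpha> \<beta> v u" using c b H_path_coord[of u v] a by auto
      then have "qc emb q (x v) (x u) 1" using r(2) by (simp add: qc_def)
      then show ?thesis using qc_sym[of "x v" "x u" 1] b a False by (simp add: kap_def gg_def hh_def sg_def)
    qed
  next
    case b: False
    show ?thesis
    proof (cases "\<alpha> u = \<alpha> v")
      case a: True
      show ?thesis
      proof (cases "\<beta> v < \<beta> u")
        case True
        then have "V_path E \<alpha> \<beta> u v" using c a V_path_coord[of v u] by auto
        then have "qc emb q (x v) (x u) 1" using r(3) by (simp add: qc_def)
        then show ?thesis using qc_sym[of "x v" "x u" 1] b a True by (simp add: kap_def gg_def hh_def sg_def)
      next
        case False
        then have "V_path E \<alpha> \<beta> v u" using c a V_path_coord[of u v] b by auto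
        then show ?thesis using r(4) b a False by (simp add: qc_def kap_def gg_def hh_def sg_def)
      qed
    next
      case a: False
      have "\<not> (H_path E \<alpha> \<beta> u v \<or> H_path E \<alpha> \<beta> v u \<or> V_path E \<alpha> \<beta> u v \<or> V_path E \<alpha> \<beta> v u)"
        using H_path_coord V_path_coord a b by fastforce
      then show ?thesis using r(5) a b by (simp add: qc_def kap_def gg_def hh_def emb_one)
    qed
  qed
qed

lemma gen_rel:
  assumes u: "u \<in> V - R - C" and v: "v \<in> V - R - C"
    and s: "s = 1 \<or> s = -1" and t: "t = 1 \<or> t = -1"
  shows "qc emb q (gen x xi (u, s)) (gen x xi (v, t)) (s * t * kap \<alpha> \<beta> u v)"
proof -
  have b: "qc emb q (x u) (x v) (kap \<alpha> \<beta> u v)" by (rule gen_rel_x[OF u v])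
  have iu: "x u * xi u = 1" "xi u * x u = 1" using inv[OF u] by auto
  have iv: "x v * xi v = 1" "xi v * x v = 1" using inv[OF v] by auto
  show ?thesis using s t
  proof (elim disjE)
    assume "s = 1" "t = 1" then show ?thesis using b by (simp add: gen_def)
  next
    assume "s = 1" "t = -1" then show ?thesis using qc_inv_right[OF b iv] by (simp add: gen_def)
  next
    assume "s = -1" "t = 1" then show ?thesis using qc_inv_left[OF b iu] by (simp add: gen_def)
  next
    assume "s = -1" "t = -1" then show ?thesis using qc_inv_right[OF qc_inv_left[OF b iu] iv] by (simp add: gen_def)
  qed
qed

lemma sv_W:
  assumes "e \<in> E" "(v, s) \<in> set (sv R \<alpha> \<beta> e)"
  shows "v \<in> V - R - C \<and> (s = 1 \<or> s = -1)"
proof -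
  have ev: "fst e \<in> V" "snd e \<in> V" using EV[OF assms(1)] by auto
  have sn: "snd e \<notin> R" using sndR[OF assms(1)] .
  have fc: "fst e \<notin> C" using fstC[OF assms(1)] .
  have snC: "H_edge \<alpha> \<beta> e \<Longrightarrow> snd e \<notin> C" using CV[OF assms(1)] HV_excl by blast
  show ?thesis
  proof (cases "fst e \<in> R")
    case True then show ?thesis using assms(2) RH[OF assms(1)] ev sn snC by (auto simp: sv_def)
  next
    case False then show ?thesis using assms(2) ev sn snC fc by (auto simp: sv_def split: if_splits)
  qed
qed

lemma svp_W: "dpath E p \<Longrightarrow> (v, s) \<in> set (svp R \<alpha> \<beta> p) \<Longrightarrow> v \<in> V - R - C \<and> (s = 1 \<or> s = -1)"
  unfolding svp_def using sv_W edges_E by fastforce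

lemma svp_set: "(v, s) \<in> set (svp R \<alpha> \<beta> p) \<Longrightarrow> v \<in> set p"
  unfolding svp_def using edges_in by (fastforce simp: sv_def split: if_splits)

lemma path_qc:
  assumes P: "dpath E P" and Q: "dpath E Q"
  shows "qc emb q (path_wt R \<alpha> \<beta> x xi P) (path_wt R \<alpha> \<beta> x xi Q)
     (lin (svp R \<alpha> \<beta> Q) (\<lambda>b. lin (svp R \<alpha> \<beta> P) (\<lambda>a. kap \<alpha> \<beta> a b)))"
proof -
  let ?LP = "svp R \<alpha> \<beta> P" and ?LQ = "svp R \<alpha> \<beta> Q"
  have "qc emb q (gen x xi b) (prod_list (map (gen x xi) ?LP))
          (sum_list (map (\<lambda>a. snd b * snd a * kap \<alpha> \<beta> (fst b) (fst a)) ?LP))"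
    if b: "b \<in> set ?LQ" for b
  proof (rule qc_prod_right)
    fix a assume a: "a \<in> set ?LP"
    obtain bv bs where bb: "b = (bv, bs)" by (cases b)
    obtain av as where aa: "a = (av, as)" by (cases a)
    show "qc emb q (gen x xi b) (gen x xi a) (snd b * snd a * kap \<alpha> \<beta> (fst b) (fst a))"
      using gen_rel svp_W[OF Q, of bv bs] svp_W[OF P, of av as] a b aa bb by auto
  qed
  then have "qc emb q (prod_list (map (gen x xi) ?LQ)) (prod_list (map (gen x xi) ?LP))
     (sum_list (map (\<lambda>b. sum_list (map (\<lambda>a. snd b * snd a * kap \<alpha> \<beta> (fst b) (fst a)) ?LP)) ?LQ))"
    by (rule qc_prod_left)
  then have "qc emb q (prod_list (map (gen x xi) ?LP)) (prod_list (map (gen x xi) ?LQ))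
     (- sum_list (map (\<lambda>b. sum_list (map (\<lambda>a. snd b * snd a * kap \<alpha> \<beta> (fst b) (fst a)) ?LP)) ?LQ))"
    by (rule qc_sym)
  moreover have "- sum_list (map (\<lambda>b. sum_list (map (\<lambda>a. snd b * snd a * kap \<alpha> \<beta> (fst b) (fst a)) ?LP)) ?LQ)
      = lin ?LQ (\<lambda>b. lin ?LP (\<lambda>a. kap \<alpha> \<beta> a b))"
  proof -
    have i: "sum_list (map (\<lambda>a. t * snd a * kap \<alpha> \<beta> bb (fst a)) L) = - (t * lin L (\<lambda>a. kap \<alpha> \<beta> a bb))" for t bb L
      by (induction L) (auto simp: kap_anti[of _ _ bb] algebra_simps)
    have "sum_list (map (\<lambda>b. sum_list (map (\<lambda>a. snd b * snd a * kap \<alpha> \<beta> (fst b) (fst a)) ?LP)) ?LQ)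
      = sum_list (map (\<lambda>b. - (snd b * lin ?LP (\<lambda>a. kap \<alpha> \<beta> a (fst b)))) ?LQ)"
      by (simp add: i)
    then show ?thesis using neg_sum[of "\<lambda>b. lin ?LP (\<lambda>a. kap \<alpha> \<beta> a b)" ?LQ] by simp
  qed
  ultimately show ?thesis by (simp add: path_wt_svp)
qed

end

context se
begin

lemma seg_sub_pts: "e \<in> set (edges_of p) \<Longrightarrow> seg e \<subseteq> pts p"
  by (auto simp: path_points_def)

lemma sv_lin: "lin (sv R \<alpha> \<beta> e) \<phi> =
   (if fst e \<in> R then \<phi> (snd e) else if H_edge \<alpha> \<beta> e then \<phi> (snd e) - \<phi> (fst e) else 0)"
  by (simp add: sv_def)

lemma svp_lin: "lin (svp R \<alpha> \<beta> p) \<phi> = sum_list (map (\<lambda>e. lin (sv R \<alpha> \<beta> e) \<phi>) (edges_of p))"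
  unfolding svp_def lin_concat ..

lemma noR: "dpath E (u # v # r) \<Longrightarrow> e \<in> set (edges_of (v # r)) \<Longrightarrow> fst e \<notin> R"
proof (induction r arbitrary: u v)
  case Nil then show ?case by simp
next
  case (Cons w r)
  have "v \<notin> R" using sndR[of "(u, v)"] Cons.prems(1) by simp
  then show ?case using Cons.IH[of v w] Cons.prems by auto
qed

lemma sum_zero: "(\<And>e. e \<in> set xs \<Longrightarrow> f e = (0::int)) \<Longrightarrow> sum_list (map f xs) = 0"
  by (induction xs) auto

lemma first_src:
  assumes "dpath E p" "2 \<le> length p"
  shows "sum_list (map (\<lambda>e. if fst e \<in> R then g (fst e) else (0::int)) (edges_of p)) =
    (if hd p \<in> R then g (hd p) else 0)"
proof -
  have "\<exists>u v r. p = u # v # r" using assms(2) by (cases p; cases "tl p") auto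
  then obtain u v r where p: "p = u # v # r" by blast
  have "sum_list (map (\<lambda>e. if fst e \<in> R then g (fst e) else (0::int)) (edges_of (v # r))) = 0"
    by (rule sum_zero) (use noR[of u v r] assms(1) p in auto)
  then show ?thesis using p by simp
qed

lemma sg_eq: "sg a b = sg c d \<longleftrightarrow> (a < b \<longleftrightarrow> c < d) \<and> (b < a \<longleftrightarrow> d < c)"
  by (auto simp: sg_def)

lemma phi_edge:
  assumes e: "e \<in> E" and b: "0 < \<alpha> b" and nb: "pt b \<notin> seg e"
  shows "lin (sv R \<alpha> \<beta> e) (\<lambda>a. kap \<alpha> \<beta> a b) =
    (gg \<alpha> \<beta> (snd e) b - gg \<alpha> \<beta> (fst e) b) + (if fst e \<in> R then (if \<beta> (fst e) = \<beta> b then 1 else 0) else 0)"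
proof -
  obtain u v where uv: "e = (u, v)" by (cases e)
  have nb': "pt b \<notin> closed_segment (pt u) (pt v)" using nb uv by (simp add: edge_seg_def)
  show ?thesis
  proof (cases "u \<in> R")
    case True
    have H: "\<beta> u = \<beta> v" "\<alpha> u < \<alpha> v" using RH[OF e] True uv by (auto simp: H_edge_def)
    have a0: "\<alpha> u = 0" using Rzero True by simp
    have g0: "gg \<alpha> \<beta> u b = 0" using a0 b by (simp add: gg_def)
    have "hh \<alpha> \<beta> v b = (if \<beta> u = \<beta> b then 1 else 0)"
    proof (cases "\<beta> v = \<beta> b")
      case True
      have "\<not> \<alpha> b \<le> \<alpha> v"
      proof
        assume "\<alpha> b \<le> \<alpha> v"
        then have "pt b \<in> closed_segment (pt u) (pt v)"
          using hseg_mem[of "pt u" "pt v" "pt b"] H True a0 b by simp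
        then show False using nb' by simp
      qed
      then show ?thesis using True H by (simp add: hh_def sg_def)
    qed (use H in \<open>simp add: hh_def\<close>)
    then show ?thesis using True uv g0 by (simp add: sv_lin kap_def)
  next
    case nR: False
    show ?thesis
    proof (cases "H_edge \<alpha> \<beta> e")
      case True
      have H: "\<beta> u = \<beta> v" "\<alpha> u < \<alpha> v" using True uv by (auto simp: H_edge_def)
      have "hh \<alpha> \<beta> v b = hh \<alpha> \<beta> u b"
      proof (cases "\<beta> v = \<beta> b")
        case True
        have "\<not> (\<alpha> u \<le> \<alpha> b \<and> \<alpha> b \<le> \<alpha> v)"
        proof
          assume "\<alpha> u \<le> \<alpha> b \<and> \<alpha> b \<le> \<alpha> v"
          then have "pt b \<in> closed_segment (pt u) (pt v)"
            using hseg_mem[of "pt u" "pt v" "pt b"] H True by simp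
          then show False using nb' by simp
        qed
        then show ?thesis using True H by (auto simp: hh_def sg_def)
      qed (use H in \<open>simp add: hh_def\<close>)
      then show ?thesis using True uv nR by (simp add: sv_lin kap_def)
    next
      case False
      then have Vv: "\<alpha> u = \<alpha> v" "\<beta> v < \<beta> u" using HorV[OF e] uv by (auto simp: V_edge_def)
      have "gg \<alpha> \<beta> v b = gg \<alpha> \<beta> u b"
      proof (cases "\<alpha> v = \<alpha> b")
        case True
        have "\<not> (\<beta> v \<le> \<beta> b \<and> \<beta> b \<le> \<beta> u)"
        proof
          assume "\<beta> v \<le> \<beta> b \<and> \<beta> b \<le> \<beta> u"
          then have "pt b \<in> closed_segment (pt u) (pt v)"
            using vseg_mem[of "pt u" "pt v" "pt b"] Vv True by simp
          then show False using nb' by simp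
        qed
        then show ?thesis using True Vv by (auto simp: gg_def sg_def)
      qed (use Vv in \<open>simp add: gg_def\<close>)
      then show ?thesis using False uv nR by (simp add: sv_lin)
    qed
  qed
qed

lemma phiP:
  assumes P: "dpath E P" "2 \<le> length P" and b: "0 < \<alpha> b" and nb: "pt b \<notin> pts P"
  shows "lin (svp R \<alpha> \<beta> P) (\<lambda>a. kap \<alpha> \<beta> a b) =
    gg \<alpha> \<beta> (last P) b - gg \<alpha> \<beta> (hd P) b + (if hd P \<in> R \<and> \<beta> (hd P) = \<beta> b then 1 else 0)"
proof -
  have "lin (svp R \<alpha> \<beta> P) (\<lambda>a. kap \<alpha> \<beta> a b) =
     sum_list (map (\<lambda>e. (gg \<alpha> \<beta> (snd e) b - gg \<alpha> \<beta> (fst e) b) +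
        (if fst e \<in> R then (if \<beta> (fst e) = \<beta> b then 1 else 0) else 0)) (edges_of P))"
    unfolding svp_lin
  proof (rule sum_list_cong')
    fix e assume e: "e \<in> set (edges_of P)"
    show "lin (sv R \<alpha> \<beta> e) (\<lambda>a. kap \<alpha> \<beta> a b) = (gg \<alpha> \<beta> (snd e) b - gg \<alpha> \<beta> (fst e) b) +
        (if fst e \<in> R then (if \<beta> (fst e) = \<beta> b then 1 else 0) else 0)"
      using phi_edge[OF edges_E[OF P(1) e] b] nb seg_sub_pts[OF e] by blast
  qed
  also have "\<dots> = sum_list (map (\<lambda>e. gg \<alpha> \<beta> (snd e) b - gg \<alpha> \<beta> (fst e) b) (edges_of P)) +
     sum_list (map (\<lambda>e. if fst e \<in> R then (if \<beta> (fst e) = \<beta> b then 1 else 0) else 0) (edges_of P))"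
    by (rule sum_list_addf)
  also have "\<dots> = gg \<alpha> \<beta> (last P) b - gg \<alpha> \<beta> (hd P) b + (if hd P \<in> R \<and> \<beta> (hd P) = \<beta> b then 1 else 0)"
  proof -
    have "P \<noteq> []" using P(2) by auto
    then show ?thesis
    using telescope[of P "\<lambda>v. gg \<alpha> \<beta> v b"] first_src[OF P, of "\<lambda>v. if \<beta> v = \<beta> b then 1 else 0"]
    by auto
  qed
  finally show ?thesis .
qed

lemma col_edge:
  assumes e: "e \<in> E" and z: "0 < \<alpha> z" and nz: "pt z \<notin> seg e"
  shows "lin (sv R \<alpha> \<beta> e) (\<lambda>b. gg \<alpha> \<beta> z b) = gg \<alpha> \<beta> z (snd e) - gg \<alpha> \<beta> z (fst e)"
proof -
  obtain u v where uv: "e = (u, v)" by (cases e)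
  have nz': "pt z \<notin> closed_segment (pt u) (pt v)" using nz uv by (simp add: edge_seg_def)
  show ?thesis
  proof (cases "u \<in> R")
    case True
    have "gg \<alpha> \<beta> z u = 0" using Rzero[OF True] z by (simp add: gg_def)
    then show ?thesis using True uv by (simp add: sv_lin)
  next
    case nR: False
    show ?thesis
    proof (cases "H_edge \<alpha> \<beta> e")
      case True then show ?thesis using nR uv by (simp add: sv_lin)
    next
      case False
      then have Vv: "\<alpha> u = \<alpha> v" "\<beta> v < \<beta> u" using HorV[OF e] uv by (auto simp: V_edge_def)
      have "gg \<alpha> \<beta> z v = gg \<alpha> \<beta> z u"
      proof (cases "\<alpha> v = \<alpha> z")
        case True
        have "\<not> (\<beta> v \<le> \<beta> z \<and> \<beta> z \<le> \<beta> u)"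
        proof
          assume "\<beta> v \<le> \<beta> z \<and> \<beta> z \<le> \<beta> u"
          then have "pt z \<in> closed_segment (pt u) (pt v)"
            using vseg_mem[of "pt u" "pt v" "pt z"] Vv True by simp
          then show False using nz' by simp
        qed
        then show ?thesis using True Vv by (auto simp: gg_def sg_def)
      qed (use Vv in \<open>auto simp add: gg_def\<close>)
      then show ?thesis using False uv nR by (simp add: sv_lin)
    qed
  qed
qed

lemma colQ:
  assumes Q: "dpath E Q" "2 \<le> length Q" and z: "0 < \<alpha> z" and nz: "pt z \<notin> pts Q"
  shows "lin (svp R \<alpha> \<beta> Q) (\<lambda>b. gg \<alpha> \<beta> z b) = gg \<alpha> \<beta> z (last Q) - gg \<alpha> \<beta> z (hd Q)"
proof -
  have "lin (svp R \<alpha> \<beta> Q) (\<lambda>b. gg \<alpha> \<beta> z b) =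
     sum_list (map (\<lambda>e. gg \<alpha> \<beta> z (snd e) - gg \<alpha> \<beta> z (fst e)) (edges_of Q))"
    unfolding svp_lin
    by (rule sum_list_cong') (use col_edge edges_E[OF Q(1)] z nz seg_sub_pts in blast)
  also have "\<dots> = gg \<alpha> \<beta> z (last Q) - gg \<alpha> \<beta> z (hd Q)"
    using telescope[of Q "\<lambda>v. gg \<alpha> \<beta> z v"] Q by (cases Q) auto
  finally show ?thesis .
qed

lemma rowQ:
  assumes Q: "dpath E Q" "2 \<le> length Q"
  shows "lin (svp R \<alpha> \<beta> Q) (\<lambda>b. f (\<beta> b)) = (if hd Q \<in> R then f (\<beta> (hd Q)) else 0)"
proof -
  have "lin (svp R \<alpha> \<beta> Q) (\<lambda>b. f (\<beta> b)) =
     sum_list (map (\<lambda>e. if fst e \<in> R then f (\<beta> (fst e)) else 0) (edges_of Q))"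
    unfolding svp_lin
  proof (rule sum_list_cong')
    fix e assume e: "e \<in> set (edges_of Q)"
    have eE: "e \<in> E" using edges_E[OF Q(1) e] .
    show "lin (sv R \<alpha> \<beta> e) (\<lambda>b. f (\<beta> b)) = (if fst e \<in> R then f (\<beta> (fst e)) else 0)"
      using RH[OF eE] by (auto simp: sv_lin H_edge_def)
  qed
  also have "\<dots> = (if hd Q \<in> R then f (\<beta> (hd Q)) else 0)"
    by (rule first_src[OF Q])
  finally show ?thesis .
qed

lemma pts_cases:
  "z \<in> pts p \<Longrightarrow> (\<exists>u\<in>set p. z = pt u) \<or> (\<exists>e\<in>set (edges_of p). z \<in> seg e)"
  by (auto simp: path_points_def)

lemma disj_pts:
  assumes P: "dpath E P" "2 \<le> length P" and Q: "dpath E Q" "2 \<le> length Q"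
    and d: "set P \<inter> set Q = {}"
  shows "pts P \<inter> pts Q = {}"
proof (rule ccontr)
  assume "pts P \<inter> pts Q \<noteq> {}"
  then obtain z where zP: "z \<in> pts P" and zQ: "z \<in> pts Q" by auto
  have VP: "set P \<subseteq> V" and VQ: "set Q \<subseteq> V" using dpath_V P Q by auto
  have vert: False if "u \<in> set P" "z = pt u" "v \<in> set Q" "z = pt v" for u v
  proof -
    have "u = v" using injp that VP VQ by (auto simp: inj_on_def)
    then show False using d that by auto
  qed
  have vseg: False if "u \<in> set P" "z = pt u" "f \<in> set (edges_of Q)" "z \<in> seg f" for u f
  proof -
    have "u = fst f \<or> u = snd f" using vonseg[of u f] that VP edges_E[OF Q(1)] by auto
    then show False using edges_in[OF that(3)] d that(1) by auto
  qed
  have vseg2: False if "v \<in> set Q" "z = pt v" "f \<in> set (edges_of P)" "z \<in> seg f" for v f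
  proof -
    have "v = fst f \<or> v = snd f" using vonseg[of v f] that VQ edges_E[OF P(1)] by auto
    then show False using edges_in[OF that(3)] d that(1) by auto
  qed
  have segs: False if "e \<in> set (edges_of P)" "z \<in> seg e" "f \<in> set (edges_of Q)" "z \<in> seg f" for e f
  proof (cases "e = f")
    case True then show False using edges_in[OF that(1)] edges_in[OF that(3)] d by auto
  next
    case False
    have "z \<in> pt ` ({fst e, snd e} \<inter> {fst f, snd f})"
      using planar[OF edges_E[OF P(1) that(1)] edges_E[OF Q(1) that(3)] False] that by auto
    then obtain w where "w \<in> {fst e, snd e}" "w \<in> {fst f, snd f}" by auto
    then show False using edges_in[OF that(1)] edges_in[OF that(3)] d by auto
  qed
  show False using pts_cases[OF zP] pts_cases[OF zQ] vert vseg vseg2 segs by blast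
qed

end

context full
begin

lemma Dlem:
  assumes P: "dpath E P" "standard_path \<alpha> \<beta> P" and Q: "dpath E Q" "standard_path \<alpha> \<beta> Q"
    and d: "set P \<inter> set Q = {}" and tt: "\<alpha> (last P) = \<alpha> (last Q)"
    and ss: "\<alpha> (hd P) = \<alpha> (hd Q) \<Longrightarrow> \<alpha> (hd P) = 0"
  shows "qc emb q (path_wt R \<alpha> \<beta> x xi P) (path_wt R \<alpha> \<beta> x xi Q) (sg (\<beta> (last P)) (\<beta> (last Q)))"
proof -
  have sP: "\<alpha> (hd P) < \<alpha> (last P)" "2 \<le> length P" using std_lt[OF P] by auto
  have sQ: "\<alpha> (hd Q) < \<alpha> (last Q)" "2 \<le> length Q" using std_lt[OF Q] by auto
  have VP: "set P \<subseteq> V" and VQ: "set Q \<subseteq> V" using dpath_V P(1) Q(1) sP sQ by auto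
  have nePQ: "P \<noteq> []" "Q \<noteq> []" using sP sQ by auto
  have hdV: "hd P \<in> V" "hd Q \<in> V" "last P \<in> V" "last Q \<in> V" using VP VQ nePQ by auto
  have dj: "pts P \<inter> pts Q = {}" using disj_pts[OF P(1) sP(2) Q(1) sQ(2) d] .
  let ?LP = "svp R \<alpha> \<beta> P" and ?LQ = "svp R \<alpha> \<beta> Q"
  let ?tP = "last P" and ?sP = "hd P" and ?tQ = "last Q" and ?sQ = "hd Q"
  have K: "lin ?LQ (\<lambda>b. lin ?LP (\<lambda>a. kap \<alpha> \<beta> a b)) =
     lin ?LQ (\<lambda>b. gg \<alpha> \<beta> ?tP b - gg \<alpha> \<beta> ?sP b + (if ?sP \<in> R \<and> \<beta> ?sP = \<beta> b then 1 else 0))"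
  proof (rule lin_cong)
    fix b s assume bs: "(b, s) \<in> set ?LQ"
    have bW: "b \<in> V - R - C" using svp_W[OF Q(1) bs] by simp
    have "pt b \<in> pts Q" using pts_vert svp_set[OF bs] by simp
    then have nb: "pt b \<notin> pts P" using dj by auto
    show "lin ?LP (\<lambda>a. kap \<alpha> \<beta> a b) =
        gg \<alpha> \<beta> ?tP b - gg \<alpha> \<beta> ?sP b + (if ?sP \<in> R \<and> \<beta> ?sP = \<beta> b then 1 else 0)"
      using phiP[OF P(1) sP(2) _ nb] inner_pos bW by auto
  qed
  have aQ: "\<And>b s. (b, s) \<in> set ?LQ \<Longrightarrow> 0 < \<alpha> b" using svp_W[OF Q(1)] inner_pos by blast
  have tP0: "0 < \<alpha> ?tP" using sP V_nonneg[OF hdV(1)] by linarith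
  have ntP: "pt ?tP \<notin> pts Q" using dj pts_last[of P] nePQ by auto
  have c1: "lin ?LQ (\<lambda>b. gg \<alpha> \<beta> ?tP b) = sg (\<beta> ?tP) (\<beta> ?tQ)"
    using colQ[OF Q(1) sQ(2) tP0 ntP] tt sQ by (simp add: gg_def)
  have c2: "lin ?LQ (\<lambda>b. gg \<alpha> \<beta> ?sP b) = 0"
  proof (cases "?sP \<in> R")
    case True
    then have "\<alpha> ?sP = 0" by (rule Rzero)
    then show ?thesis using aQ by (intro lin_zero) (fastforce simp: gg_def)
  next
    case False
    then have sP0: "0 < \<alpha> ?sP" using inner_pos hdV by simp
    have nsP: "pt ?sP \<notin> pts Q" using dj pts_hd[of P] nePQ by auto
    have "\<alpha> ?sP \<noteq> \<alpha> ?sQ" using ss sP0 by auto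
    then show ?thesis using colQ[OF Q(1) sQ(2) sP0 nsP] tt sP by (simp add: gg_def)
  qed
  have c3: "lin ?LQ (\<lambda>b. if ?sP \<in> R \<and> \<beta> ?sP = \<beta> b then 1 else 0) = 0"
  proof -
    have "lin ?LQ (\<lambda>b. (\<lambda>y. if ?sP \<in> R \<and> \<beta> ?sP = y then 1 else 0) (\<beta> b)) =
        (if ?sQ \<in> R then (if ?sP \<in> R \<and> \<beta> ?sP = \<beta> ?sQ then 1 else 0) else 0)"
      by (rule rowQ[OF Q(1) sQ(2)])
    moreover have "\<not> (?sQ \<in> R \<and> ?sP \<in> R \<and> \<beta> ?sP = \<beta> ?sQ)"
    proof
      assume h: "?sQ \<in> R \<and> ?sP \<in> R \<and> \<beta> ?sP = \<beta> ?sQ"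
      then have "pt ?sP = pt ?sQ" using Rzero by (simp add: pos_def)
      then have "?sP = ?sQ" using injp hdV by (auto simp: inj_on_def)
      then show False using d nePQ by (metis IntI empty_iff list.set_sel(1))
    qed
    ultimately show ?thesis by auto
  qed
  have "lin ?LQ (\<lambda>b. lin ?LP (\<lambda>a. kap \<alpha> \<beta> a b)) = sg (\<beta> ?tP) (\<beta> ?tQ)"
    unfolding K lin_add lin_diff c1 c2 c3 by simp
  then show ?thesis using path_qc[OF P(1) Q(1)] by simp
qed

end

lemma le2_mono: "le2 a b \<Longrightarrow> 0 \<le> c1 \<Longrightarrow> c2 \<le> 0 \<Longrightarrow>
   c1 * fst a + c2 * snd a \<le> c1 * fst b + c2 * snd b"
  unfolding le2_def by (intro add_mono mult_left_mono mult_left_mono_neg) auto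

lemma seg_sub: "z1 \<in> closed_segment a b \<Longrightarrow> z2 \<in> closed_segment a b \<Longrightarrow>
   closed_segment z1 z2 \<subseteq> closed_segment a b"
  by (simp add: subset_closed_segment)

context se
begin

lemma ivt:
  assumes "dpath E p" "z1 \<in> pts p" "z2 \<in> pts p" "le2 z1 z2" "0 \<le> c1" "c2 \<le> 0"
    "c1 * fst z1 + c2 * snd z1 \<le> y" "y \<le> c1 * fst z2 + c2 * snd z2"
  shows "\<exists>w\<in>pts p. le2 z1 w \<and> le2 w z2 \<and> c1 * fst w + c2 * snd w = y"
  using assms
proof (induction p arbitrary: z1 z2 rule: induct_list012)
  case 1 then show ?case by simp
next
  case (2 u)
  then have "z1 = pt u" "z2 = pt u" by (auto simp: pts_simps)
  then show ?case using 2 by (intro bexI[of _ z1]) auto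
next
  case (3 u v r)
  let ?S = "closed_segment (pt u) (pt v)"
  have e: "(u, v) \<in> E" and d: "dpath E (v # r)" using "3.prems"(1) by auto
  have uv: "le2 (pt u) (pt v)" by (rule edge_le2[OF e])
  have ptsu: "pts (u # v # r) = ?S \<union> pts (v # r)" by (simp add: pts_simps)
  have vin: "pt v \<in> pts (v # r)" using pts_hd[of "v # r"] by simp
  have rest_ge: "\<And>z. z \<in> pts (v # r) \<Longrightarrow> le2 (pt v) z" using path_pts_le[OF d] by auto
  have S_le: "\<And>z. z \<in> ?S \<Longrightarrow> le2 (pt u) z \<and> le2 z (pt v)" using seg_le2[OF uv] by auto
  show ?case
  proof (cases "z1 \<in> pts (v # r) \<and> z2 \<in> pts (v # r)")
    case True
    then show ?thesis using "3.IH"(2)[OF d _ _ "3.prems"(4-8)] ptsu by blast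
  next
    case F1: False
    show ?thesis
    proof (cases "z1 \<in> pts (v # r)")
      case True
      then have z2S: "z2 \<in> ?S" using F1 "3.prems"(3) ptsu by auto
      have "le2 z2 z1" using le2_trans[OF conjunct2[OF S_le[OF z2S]] rest_ge[OF True]] .
      then have "z1 = z2" using "3.prems"(4) le2_antisym by blast
      then show ?thesis using "3.prems" by (intro bexI[of _ z1]) auto
    next
      case z1n: False
      then have z1S: "z1 \<in> ?S" using "3.prems"(2) ptsu by auto
      show ?thesis
      proof (cases "z2 \<in> pts (v # r)")
        case z2r: True
        show ?thesis
        proof (cases "y \<le> c1 * fst (pt v) + c2 * snd (pt v)")
          case True
          obtain w where w: "w \<in> closed_segment z1 (pt v)" "c1 * fst w + c2 * snd w = y"
            using seg_ivt[of c1 z1 c2 y "pt v"] "3.prems"(7) True by auto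
          have vS: "pt v \<in> ?S" by simp
          have wS: "w \<in> ?S" using seg_sub[OF z1S vS] w(1) by auto
          have "le2 z1 w" "le2 w (pt v)" using seg_le2[OF _ w(1)] S_le[OF z1S] by auto
          moreover have "le2 w z2" using le2_trans[OF \<open>le2 w (pt v)\<close> rest_ge[OF z2r]] .
          ultimately show ?thesis using w wS ptsu by auto
        next
          case False
          have m: "c1 * fst (pt v) + c2 * snd (pt v) \<le> y" using False by simp
          obtain w where w: "w \<in> pts (v # r)" "le2 (pt v) w" "le2 w z2" "c1 * fst w + c2 * snd w = y"
            using "3.IH"(2)[OF d vin z2r rest_ge[OF z2r] "3.prems"(5,6) m "3.prems"(8)] by blast
          have "le2 z1 w" using le2_trans[OF conjunct2[OF S_le[OF z1S]] w(2)] .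
          then show ?thesis using w ptsu by auto
        qed
      next
        case False
        then have z2S: "z2 \<in> ?S" using "3.prems"(3) ptsu by auto
        obtain w where w: "w \<in> closed_segment z1 z2" "c1 * fst w + c2 * snd w = y"
          using seg_ivt[of c1 z1 c2 y z2] "3.prems"(7,8) by auto
        have wS: "w \<in> ?S" using seg_sub[OF z1S z2S] w(1) by auto
        have "le2 z1 w" "le2 w z2" using seg_le2[OF "3.prems"(4) w(1)] by auto
        then show ?thesis using w wS ptsu by auto
      qed
    qed
  qed
qed

definition belowQ where "belowQ Q z \<longleftrightarrow> (\<exists>q\<in>pts Q. fst q = fst z \<and> snd z < snd q)"

lemma seg_edge_le: "e \<in> E \<Longrightarrow> z \<in> seg e \<Longrightarrow> le2 (pt (fst e)) z \<and> le2 z (pt (snd e))"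
  using seg_le2[OF edge_le2[of "fst e" "snd e"]] by (simp add: edge_seg_def)

lemma step:
  assumes Q: "dpath E Q" and e: "e \<in> E" and dj: "seg e \<inter> pts Q = {}"
    and z: "z1 \<in> seg e" "z2 \<in> seg e" "le2 z1 z2"
    and b: "belowQ Q z1" and q2: "q2 \<in> pts Q" "fst q2 = fst z2"
  shows "belowQ Q z2"
proof (rule ccontr)
  assume nb: "\<not> belowQ Q z2"
  obtain q1 where q1: "q1 \<in> pts Q" "fst q1 = fst z1" "snd z1 < snd q1" using b by (auto simp: belowQ_def)
  have "snd q2 \<noteq> snd z2"
  proof
    assume "snd q2 = snd z2"
    then have "q2 = z2" using q2 by (simp add: prod_eq_iff)
    then show False using dj z q2 by auto
  qed
  then have lt: "snd q2 < snd z2" using nb q2 by (auto simp: belowQ_def)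
  have "le2 q1 q2" using q1 q2 z(3) lt by (auto simp: le2_def)
  then obtain w where w: "w \<in> pts Q" "le2 q1 w" "le2 w q2" "0 * fst w + (-1) * snd w = - snd z2"
    using ivt[OF Q q1(1) q2(1), of 0 "-1" "- snd z2"] q1 z(3) lt by (auto simp: le2_def)
  have wb: "fst z1 \<le> fst w" "fst w \<le> fst z2" "snd w = snd z2" using w q1 q2 by (auto simp: le2_def)
  obtain u v where uv: "e = (u, v)" by (cases e)
  have zz: "le2 (pt u) z1" "le2 z1 (pt v)" "le2 (pt u) z2" "le2 z2 (pt v)"
    using seg_edge_le[OF e] z uv by auto
  have "w \<in> seg e"
  proof (cases "H_edge \<alpha> \<beta> e")
    case True
    then have "\<beta> u = \<beta> v" using uv by (simp add: H_edge_def)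
    then have "snd z1 = snd z2" using zz by (auto simp: le2_def)
    then have "w \<in> closed_segment z1 z2" using hseg_mem[of z1 z2 w] wb z(3) by (auto simp: le2_def)
    then show ?thesis using seg_sub[of z1 "pt u" "pt v" z2] z uv by (auto simp: edge_seg_def)
  next
    case False
    then have "\<alpha> u = \<alpha> v" using HorV[OF e] uv by (simp add: V_edge_def)
    then have "fst z1 = fst z2" using zz by (auto simp: le2_def)
    then have "w = z2" using wb by (simp add: prod_eq_iff)
    then show ?thesis using z by simp
  qed
  then show False using dj w(1) by auto
qed

lemma propg:
  assumes "dpath E L" "\<forall>e\<in>set (edges_of L). seg e \<inter> pts Q = {}" "z \<in> pts L" "belowQ Q z"
    "\<forall>c. fst z \<le> c \<and> c \<le> \<alpha> (last L) \<longrightarrow> (\<exists>q\<in>pts Q. fst q = c)" "dpath E Q"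
  shows "belowQ Q (pt (last L))"
  using assms
proof (induction L arbitrary: z rule: induct_list012)
  case 1 then show ?case by simp
next
  case (2 u) then show ?case by (simp add: pts_simps)
next
  case (3 u v r)
  have e: "(u, v) \<in> E" and d: "dpath E (v # r)" using "3.prems"(1) by auto
  have eds: "\<forall>e\<in>set (edges_of (v # r)). seg e \<inter> pts Q = {}" using "3.prems"(2) by simp
  have vin: "pt v \<in> pts (v # r)" using pts_hd[of "v # r"] by simp
  have lv: "le2 (pt v) (pt (last (v # r)))" using path_pts_le[OF d vin] by simp
  show ?case
  proof (cases "z \<in> seg (u, v)")
    case True
    have zv: "le2 z (pt v)" using seg_edge_le[OF e True] by simp
    have vseg: "pt v \<in> seg (u, v)" by (simp add: edge_seg_def)
    obtain q2 where q2: "q2 \<in> pts Q" "fst q2 = fst (pt v)"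
      using "3.prems"(5) zv lv by (auto simp: le2_def)
    have "belowQ Q (pt v)"
      using step[OF "3.prems"(6) e _ True vseg zv "3.prems"(4) q2] "3.prems"(2) by simp
    moreover have "\<forall>c. fst (pt v) \<le> c \<and> c \<le> \<alpha> (last (v # r)) \<longrightarrow> (\<exists>q\<in>pts Q. fst q = c)"
      using "3.prems"(5) zv by (auto simp: le2_def)
    ultimately show ?thesis using "3.IH"(2)[OF d eds vin] "3.prems"(6) by simp
  next
    case False
    then have "z \<in> pts (v # r)" using "3.prems"(3) by (simp add: pts_simps edge_seg_def)
    then show ?thesis using "3.IH"(2)[OF d eds] "3.prems"(4-6) by simp
  qed
qed

lemma Gm:
  assumes P: "dpath E P" "standard_path \<alpha> \<beta> P" and Q: "dpath E Q" "standard_path \<alpha> \<beta> Q"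
    and d: "set P \<inter> set Q = {}" and tt: "\<alpha> (last P) = \<alpha> (last Q)"
    and low: "lower_than \<alpha> \<beta> P Q"
  shows "\<beta> (last P) < \<beta> (last Q)"
proof -
  have sP: "2 \<le> length P" and sQ: "2 \<le> length Q" using std_lt P Q by auto
  have dj: "pts P \<inter> pts Q = {}" using disj_pts[OF P(1) sP Q(1) sQ d] .
  have neQ: "Q \<noteq> []" "P \<noteq> []" using sQ sP by auto
  obtain xw yw where w: "xw \<in> pts P" "yw \<in> pts Q" "fst xw = fst yw" "snd xw < snd yw"
    using low by (auto simp: lower_than_def)
  have bx: "belowQ Q xw" using w by (auto simp: belowQ_def)
  have tQin: "pt (last Q) \<in> pts Q" using pts_last neQ by simp
  have ytQ: "le2 yw (pt (last Q))" using path_pts_le[OF Q(1) w(2)] by simp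
  have cols: "\<forall>c. fst xw \<le> c \<and> c \<le> \<alpha> (last P) \<longrightarrow> (\<exists>q\<in>pts Q. fst q = c)"
  proof (intro allI impI)
    fix c assume c: "fst xw \<le> c \<and> c \<le> \<alpha> (last P)"
    obtain w' where "w' \<in> pts Q" "1 * fst w' + 0 * snd w' = c"
      using ivt[OF Q(1) w(2) tQin ytQ, of 1 0 c] c w(3) tt by auto
    then show "\<exists>q\<in>pts Q. fst q = c" by auto
  qed
  have eds: "\<forall>e\<in>set (edges_of P). seg e \<inter> pts Q = {}" using dj seg_sub_pts by blast
  have "belowQ Q (pt (last P))" using propg[OF P(1) eds w(1) bx cols Q(1)] .
  then obtain q where q: "q \<in> pts Q" "fst q = \<alpha> (last P)" "\<beta> (last P) < snd q"
    by (auto simp: belowQ_def)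
  have ntP: "pt (last P) \<notin> pts Q" using dj pts_last neQ by auto
  show ?thesis
  proof (rule ccontr)
    assume "\<not> \<beta> (last P) < \<beta> (last Q)"
    then have le: "\<beta> (last Q) \<le> \<beta> (last P)" by simp
    have lq: "le2 q (pt (last Q))" using path_pts_le[OF Q(1) q(1)] by simp
    obtain w' where w': "w' \<in> pts Q" "le2 q w'" "le2 w' (pt (last Q))" "0 * fst w' + (-1) * snd w' = - \<beta> (last P)"
      using ivt[OF Q(1) q(1) tQin lq, of 0 "-1" "- \<beta> (last P)"] q le by auto
    have "w' = pt (last P)" using w' q tt by (auto simp: le2_def prod_eq_iff)
    then show False using ntP w'(1) by simp
  qed
qed

end

lemma edges_snoc: "Pb \<noteq> [] \<Longrightarrow> edges_of (Pb @ [t]) = edges_of Pb @ [(last Pb, t)]"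
  by (induction Pb rule: induct_list012) auto

lemma dpath_snoc: "Pb \<noteq> [] \<Longrightarrow> dpath E (Pb @ [t]) \<longleftrightarrow> dpath E Pb \<and> (last Pb, t) \<in> E"
  by (auto simp: dpath_def edges_snoc)

lemma pts_snoc: "Pb \<noteq> [] \<Longrightarrow>
   path_points a b (Pb @ [t]) = path_points a b Pb \<union> closed_segment (pos a b (last Pb)) (pos a b t)"
  by (auto simp: path_points_def edges_snoc edge_seg_def)

lemma wt_snoc: "Pb \<noteq> [] \<Longrightarrow>
   path_wt R a b x xi (Pb @ [t]) = path_wt R a b x xi Pb * edge_wt R a b x xi (last Pb, t)"
  by (simp add: path_wt_def edges_snoc)

lemma snoc_decomp: "2 \<le> length P \<Longrightarrow> \<exists>Pb t. P = Pb @ [t] \<and> Pb \<noteq> []"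
proof -
  assume h: "2 \<le> length P"
  then have "P \<noteq> []" by auto
  moreover have "butlast P \<noteq> []" using h by (cases P) auto
  ultimately show ?thesis by (metis append_butlast_last_id)
qed

lemma std_snoc: "Pb \<noteq> [] \<Longrightarrow> standard_path a b (Pb @ [t]) \<Longrightarrow> \<not> H_edge a b (last Pb, t) \<Longrightarrow>
   standard_path a b Pb"
  by (auto simp: standard_path_def edges_snoc)

theorem lemmaA3:
  fixes V :: "'v set" and E :: "('v \<times> 'v) set" and R C :: "'v set"
    and \<alpha> \<beta> :: "'v \<Rightarrow> real"
    and q :: "'k::field" and emb :: "'k \<Rightarrow> 'a::ring_1"
    and x xi :: "'v \<Rightarrow> 'a"
    and P Q :: "'v list"
  assumes G: "SE_graph V E R C \<alpha> \<beta>"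
    and emb_one: "emb 1 = 1"
    and emb_add: "\<And>a b. emb (a + b) = emb a + emb b"
    and emb_mult: "\<And>a b. emb (a * b) = emb a * emb b"
    and emb_central: "\<And>a y. emb a * y = y * emb a"
    and q_nz: "q \<noteq> 0"
    and inv: "\<And>v. v \<in> V - R - C \<Longrightarrow> x v * xi v = 1 \<and> xi v * x v = 1"
    and rel: "LG_relations E (V - R - C) \<alpha> \<beta> (emb q) x"
    and P: "dpath E P" and Q: "dpath E Q"
    and stP: "standard_path \<alpha> \<beta> P" and stQ: "standard_path \<alpha> \<beta> Q"
    and wi: "weakly_intersecting P Q"
    and tt: "\<alpha> (last P) = \<alpha> (last Q)"
    and ss: "\<alpha> (hd P) \<noteq> \<alpha> (hd Q) \<or> (\<alpha> (hd P) = 0 \<and> \<alpha> (hd Q) = 0)"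
    and low: "lower_than \<alpha> \<beta> P Q"
  shows "path_wt R \<alpha> \<beta> x xi P * path_wt R \<alpha> \<beta> x xi Q
         = emb q * (path_wt R \<alpha> \<beta> x xi Q * path_wt R \<alpha> \<beta> x xi P)"
proof -
  interpret F: full V E R C \<alpha> \<beta> emb q x xi
    by (unfold_locales; (rule G emb_one emb_mult emb_central q_nz inv rel)?)
  have goal: "qc emb q (path_wt R \<alpha> \<beta> x xi P) (path_wt R \<alpha> \<beta> x xi Q) 1 \<Longrightarrow> ?thesis"
    by (simp add: qc_def)
  have sP: "\<alpha> (hd P) < \<alpha> (last P)" "2 \<le> length P" using F.std_lt[OF P stP] by auto
  have sQ: "\<alpha> (hd Q) < \<alpha> (last Q)" "2 \<le> length Q" using F.std_lt[OF Q stQ] by auto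
  have VP: "set P \<subseteq> V" and VQ: "set Q \<subseteq> V" using F.dpath_V P Q sP sQ by auto
  have neP: "P \<noteq> []" and neQ: "Q \<noteq> []" using sP sQ by auto
  have ss': "\<alpha> (hd P) = \<alpha> (hd Q) \<Longrightarrow> \<alpha> (hd P) = 0" using ss by auto
  have inter: "set P \<inter> set Q = {hd P, last P} \<inter> {hd Q, last Q}"
    using wi by (simp add: weakly_intersecting_def)
  show ?thesis
  proof (cases "hd P = hd Q")
    case hdeq: True
    have a0: "\<alpha> (hd P) = 0" using ss' hdeq by simp
    obtain s v1 r1 where Pd: "P = s # v1 # r1" using sP(2) by (cases P; cases "tl P") auto
    obtain s' v2 r2 where Qd: "Q = s' # v2 # r2" using sQ(2) by (cases Q; cases "tl Q") auto
    have ss0: "s' = s" using hdeq Pd Qd by simp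
    have sV: "s \<in> V" "v1 \<in> V" "v2 \<in> V" using VP VQ Pd Qd ss0 by auto
    have sR: "s \<in> R" using F.inner_pos[of s] a0 sV Pd by force
    have e1: "(s, v1) \<in> E" using P Pd by simp
    have e2: "(s, v2) \<in> E" using Q Qd ss0 by simp
    have H1: "\<beta> s = \<beta> v1" "\<alpha> s < \<alpha> v1" using F.RH[OF e1] sR by (auto simp: H_edge_def)
    have H2: "\<beta> s = \<beta> v2" "\<alpha> s < \<alpha> v2" using F.RH[OF e2] sR by (auto simp: H_edge_def)
    have False
    proof (cases "v1 = v2")
      case True
      have "v1 \<in> set P \<inter> set Q" using Pd Qd True by auto
      then have "v1 \<in> {hd P, last P} \<inter> {hd Q, last Q}" using inter by blast
      moreover have "hd P = s" "hd Q = s" using Pd Qd ss0 by auto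
      moreover have "v1 \<noteq> s" using H1 by auto
      ultimately have l1: "v1 = last P" "v1 = last Q" by auto
      have dP: "distinct P" using F.dpath_distinct[OF P] .
      have "\<beta> (hd P) = \<beta> (last P)" using l1 H1 Pd by simp
      have bP: "\<And>z. z \<in> path_points \<alpha> \<beta> P \<Longrightarrow> snd z = \<beta> s"
        using F.path_pts_le[OF P] l1 H1 Pd by (fastforce simp: le2_def)
      have bQ: "\<And>z. z \<in> path_points \<alpha> \<beta> Q \<Longrightarrow> snd z = \<beta> s"
        using F.path_pts_le[OF Q] l1 H1 Qd ss0 by (fastforce simp: le2_def)
      show False using low bP bQ by (auto simp: lower_than_def)
    next
      case False
      have v1s: "v1 \<noteq> s" "v2 \<noteq> s" using H1 H2 by auto
      show False
      proof (cases "\<alpha> v1 \<le> \<alpha> v2")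
        case True
        have "pos \<alpha> \<beta> v1 \<in> closed_segment (pos \<alpha> \<beta> s) (pos \<alpha> \<beta> v2)"
          using hseg_mem[of "pos \<alpha> \<beta> s" "pos \<alpha> \<beta> v2" "pos \<alpha> \<beta> v1"] H1 H2 True by simp
        then have "v1 = s \<or> v1 = v2" using F.vonseg[OF sV(2) e2] by (simp add: edge_seg_def)
        then show False using v1s False by simp
      next
        case le: False
        have "pos \<alpha> \<beta> v2 \<in> closed_segment (pos \<alpha> \<beta> s) (pos \<alpha> \<beta> v1)"
          using hseg_mem[of "pos \<alpha> \<beta> s" "pos \<alpha> \<beta> v1" "pos \<alpha> \<beta> v2"] H1 H2 le by simp
        then have "v2 = s \<or> v2 = v1" using F.vonseg[OF sV(3) e1] by (simp add: edge_seg_def)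
        then show False using v1s False by auto
      qed
    qed
    then show ?thesis ..
  next
    case hdne: False
    show ?thesis
    proof (cases "last P = last Q")
      case lasteq: True
      define t where "t = last P"
      obtain Pb t1 where Pd: "P = Pb @ [t1]" "Pb \<noteq> []" using snoc_decomp[OF sP(2)] by blast
      obtain Qb t2 where Qd: "Q = Qb @ [t2]" "Qb \<noteq> []" using snoc_decomp[OF sQ(2)] by blast
      have t12: "t1 = t" "t2 = t" using Pd Qd lasteq t_def by auto
      have dP: "dpath E Pb" and eP: "(last Pb, t) \<in> E" using P Pd t12 dpath_snoc[OF Pd(2), of E t] by auto
      have dQ: "dpath E Qb" and eQ: "(last Qb, t) \<in> E" using Q Qd t12 dpath_snoc[OF Qd(2), of E t] by auto
      have tnP: "t \<notin> set Pb" using F.dpath_distinct[OF P] Pd t12 by auto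
      have tnQ: "t \<notin> set Qb" using F.dpath_distinct[OF Q] Qd t12 by auto
      have hdt: "hd P \<noteq> t" "hd Q \<noteq> t" using sP(1) sQ(1) t_def lasteq by auto
      have inter1: "set P \<inter> set Q = {t}"
        using inter hdne hdt lasteq t_def neP by auto
      have dPbQ: "set Pb \<inter> set Q = {}" using inter1 tnP Pd by auto
      have dPQb: "set P \<inter> set Qb = {}" using inter1 tnQ Qd by auto
      define p' where "p' = last Pb"
      define q' where "q' = last Qb"
      have p'in: "p' \<in> set Pb" and q'in: "q' \<in> set Qb" using Pd Qd p'_def q'_def by auto
      have pq: "p' \<noteq> q'" using p'in q'in dPbQ Qd by auto
      have p't: "p' \<noteq> t" "q' \<noteq> t" using p'in q'in tnP tnQ by auto
      have pV: "p' \<in> V" "q' \<in> V" "t \<in> V" using F.EV eP eQ p'_def q'_def by auto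
      have eP': "(p', t) \<in> E" and eQ': "(q', t) \<in> E" using eP eQ p'_def q'_def by auto
      have hdQb: "hd Qb = hd Q" using Qd by simp
      have lastQb: "last Qb = q'" using q'_def by simp
      show ?thesis
      proof (cases "H_edge \<alpha> \<beta> (p', t)")
        case HP: True
        have HP': "\<beta> p' = \<beta> t" "\<alpha> p' < \<alpha> t" using HP by (auto simp: H_edge_def)
        show ?thesis
        proof (cases "H_edge \<alpha> \<beta> (q', t)")
          case HQ: True
          have HQ': "\<beta> q' = \<beta> t" "\<alpha> q' < \<alpha> t" using HQ by (auto simp: H_edge_def)
          have False
          proof (cases "\<alpha> p' \<le> \<alpha> q'")
            case True
            have "pos \<alpha> \<beta> q' \<in> closed_segment (pos \<alpha> \<beta> p') (pos \<alpha> \<beta> t)"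
              using hseg_mem[of "pos \<alpha> \<beta> p'" "pos \<alpha> \<beta> t" "pos \<alpha> \<beta> q'"] HP' HQ' True by simp
            then have "q' = p' \<or> q' = t" using F.vonseg[OF pV(2) eP'] by (simp add: edge_seg_def)
            then show False using pq p't by auto
          next
            case False
            have "pos \<alpha> \<beta> p' \<in> closed_segment (pos \<alpha> \<beta> q') (pos \<alpha> \<beta> t)"
              using hseg_mem[of "pos \<alpha> \<beta> q'" "pos \<alpha> \<beta> t" "pos \<alpha> \<beta> p'"] HP' HQ' False by simp
            then have "p' = q' \<or> p' = t" using F.vonseg[OF pV(1) eQ'] by (simp add: edge_seg_def)
            then show False using pq p't by auto
          qed
          then show ?thesis ..
        next
          case VQ': False
          have VQ2: "\<alpha> q' = \<alpha> t" "\<beta> t < \<beta> q'" using F.HorV[OF eQ'] VQ' by (auto simp: V_edge_def)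
          have q'R: "q' \<notin> R" using F.RH[OF eQ'] VQ' by auto
          have wQ: "path_wt R \<alpha> \<beta> x xi Q = path_wt R \<alpha> \<beta> x xi Qb"
            using wt_snoc[OF Qd(2), of R \<alpha> \<beta> x xi t] Qd t12 q'R VQ' q'_def by (simp add: edge_wt_def)
          have stQb: "standard_path \<alpha> \<beta> Qb" using std_snoc[OF Qd(2)] stQ Qd t12 VQ' q'_def by simp
          have tt': "\<alpha> (last P) = \<alpha> (last Qb)" using lastQb VQ2 t_def by simp
          have ss2: "\<alpha> (hd P) = \<alpha> (hd Qb) \<Longrightarrow> \<alpha> (hd P) = 0" using ss' hdQb by simp
          have "sg (\<beta> (last P)) (\<beta> (last Qb)) = 1" using lastQb VQ2 t_def by (simp add: sg_def)
          then show ?thesis using goal F.Dlem[OF P stP dQ stQb dPQb tt' ss2] wQ by simp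
        qed
      next
        case VP': False
        have VP2: "\<alpha> p' = \<alpha> t" "\<beta> t < \<beta> p'" using F.HorV[OF eP'] VP' by (auto simp: V_edge_def)
        show ?thesis
        proof (cases "H_edge \<alpha> \<beta> (q', t)")
          case HQ: True
          have HQ': "\<beta> q' = \<beta> t" "\<alpha> q' < \<alpha> t" using HQ by (auto simp: H_edge_def)
          have stPb: "standard_path \<alpha> \<beta> Pb" using std_snoc[OF Pd(2)] stP Pd t12 VP' p'_def by simp
          have lowb: "lower_than \<alpha> \<beta> Pb Q"
          proof -
            obtain xw yw where w: "xw \<in> path_points \<alpha> \<beta> P" "yw \<in> path_points \<alpha> \<beta> Q"
                "fst xw = fst yw" "snd xw < snd yw"
              using low by (auto simp: lower_than_def)
            have "xw \<in> path_points \<alpha> \<beta> Pb"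
            proof (rule ccontr)
              assume nx: "xw \<notin> path_points \<alpha> \<beta> Pb"
              then have xs: "xw \<in> closed_segment (pos \<alpha> \<beta> p') (pos \<alpha> \<beta> t)"
                using w(1) pts_snoc[OF Pd(2)] Pd t12 p'_def by auto
              have "le2 (pos \<alpha> \<beta> p') xw" "le2 xw (pos \<alpha> \<beta> t)"
                using seg_le2[OF F.edge_le2[OF eP'] xs] by auto
              then have xc: "fst xw = \<alpha> t" "\<beta> t \<le> snd xw" using VP2 by (auto simp: le2_def pos_def)
              show False
              proof (cases "yw \<in> path_points \<alpha> \<beta> Qb")
                case True
                have "le2 yw (pos \<alpha> \<beta> (last Qb))" using F.path_pts_le[OF dQ True] by simp
                then show False using xc w(3) HQ' lastQb by (auto simp: le2_def pos_def)
              next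
                case False
                then have ys: "yw \<in> closed_segment (pos \<alpha> \<beta> q') (pos \<alpha> \<beta> t)"
                  using w(2) pts_snoc[OF Qd(2)] Qd t12 q'_def by auto
                have "le2 (pos \<alpha> \<beta> q') yw" "le2 yw (pos \<alpha> \<beta> t)"
                  using seg_le2[OF F.edge_le2[OF eQ'] ys] by auto
                then have "snd yw = \<beta> t" using HQ' by (auto simp: le2_def pos_def)
                then show False using xc w(4) by simp
              qed
            qed
            then show ?thesis using w by (auto simp: lower_than_def)
          qed
          have tt': "\<alpha> (last Pb) = \<alpha> (last Q)" using VP2 p'_def lasteq t_def by simp
          have "\<beta> (last Pb) < \<beta> (last Q)" using F.Gm[OF dP stPb Q stQ dPbQ tt' lowb] .
          then have False using VP2 p'_def lasteq t_def by simp
          then show ?thesis ..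
        next
          case VQ': False
          have VQ2: "\<alpha> q' = \<alpha> t" "\<beta> t < \<beta> q'" using F.HorV[OF eQ'] VQ' by (auto simp: V_edge_def)
          have False
          proof (cases "\<beta> q' \<le> \<beta> p'")
            case True
            have "pos \<alpha> \<beta> q' \<in> closed_segment (pos \<alpha> \<beta> p') (pos \<alpha> \<beta> t)"
              using vseg_mem[of "pos \<alpha> \<beta> p'" "pos \<alpha> \<beta> t" "pos \<alpha> \<beta> q'"] VP2 VQ2 True by simp
            then have "q' = p' \<or> q' = t" using F.vonseg[OF pV(2) eP'] by (simp add: edge_seg_def)
            then show False using pq p't by auto
          next
            case False
            have "pos \<alpha> \<beta> p' \<in> closed_segment (pos \<alpha> \<beta> q') (pos \<alpha> \<beta> t)"
              using vseg_mem[of "pos \<alpha> \<beta> q'" "pos \<alpha> \<beta> t" "pos \<alpha> \<beta> p'"] VP2 VQ2 False by simp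
            then have "p' = q' \<or> p' = t" using F.vonseg[OF pV(1) eQ'] by (simp add: edge_seg_def)
            then show False using pq p't by auto
          qed
          then show ?thesis ..
        qed
      qed
    next
      case lastne: False
      have d: "set P \<inter> set Q = {}"
        using inter hdne lastne sP(1) sQ(1) tt by auto
      have "\<beta> (last P) < \<beta> (last Q)" using F.Gm[OF P stP Q stQ d tt low] .
      then have "sg (\<beta> (last P)) (\<beta> (last Q)) = 1" by (simp add: sg_def)
      then show ?thesis using goal F.Dlem[OF P stP Q stQ d tt ss'] by simp
    qed
  qed
qed

end
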